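(* Let $G=(V,E)$ be a control flow graph, let $p$ be a predicate node with successors $s_1,s_2$ in $G$ and with at least two successors in $A_p$. Assume $V_1\cap V_2=\emptyset$ and let $U=V_p\setminus(V_1\cup V_2)$. Then there exist nodes $a,b$ that are DOD on $p$ if and only if the cycle $C$ of $A_p$ has an unfolding belonging to the language $V_1.U^*.(V_2.U^* )^*.V_2.U^*.(V_1.U^* )^*$.
   Context: A control flow graph (CFG) is a finite directed graph $G=(V,E)$ in which every node has at most two outgoing edges; nodes with exactly two outgoing edges are predicate nodes. A path from $n_1$ is a nonempty finite or infinite sequence of nodes with each adjacent pair an edge; it is maximal if it is infinite or its last node has no successor. $V_p$ is the set of nodes occurring on all maximal paths from $p$ in $G$. For $V'\subseteq V$, a $V'$-interval from $x$ to $y$ is a finite path $n_1\ldots n_k$ in $G$ with $k\ge 2$, $n_1=x\in V'$, $n_k=y\in V'$, and $n_i\notin V'$ for $1<i<k$. $A_p$ is the directed graph with node set $V_p$ and an edge $(x,y)$ iff there is a $V_p$-interval from $x$ to $y$ in $G$. The cycle $C$ of $A_p$ is the subgraph of $A_p$ induced by $V_p\setminus\{p\}$; an unfolding of $C$ is a path in $C$ containing each node of $C$ exactly once, viewed as a word over the alphabet $V_p$. For $i\in\{1,2\}$, $V_i$ is the set of nodes $n\in V_p$ such that there is a finite path in $G$ from $s_i$ to $n$ whose nodes other than the last one all lie outside $V_p$ (possibly $n=s_i$). For three distinct nodes $p,a,b$ with $p$ a predicate node with successors $s_1,s_2$, the nodes $a,b$ are DOD on $p$ if all maximal paths from $p$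 contain both $a$ and $b$, all maximal paths from $s_1$ contain $a$ before any occurrence of $b$, and all maximal paths from $s_2$ contain $b$ before any occurrence of $a$. Concatenation and Kleene star of sets of nodes are the usual regular-language operations. *)

theory Defs
  imports Main
begin

definition cfg :: "'a set \<Rightarrow> ('a \<times> 'a) set \<Rightarrow> bool" where
  "cfg V E \<longleftrightarrow> finite V \<and> E \<subseteq> V \<times> V \<and> (\<forall>x\<in>V. card (E `` {x}) \<le> 2)"

definition fpath :: "'a set \<Rightarrow> ('a \<times> 'a) set \<Rightarrow> 'a list \<Rightarrow> bool" where
  "fpath V E xs \<longleftrightarrow> xs \<noteq> [] \<and> set xs \<subseteq> V \<and>
     (\<forall>i. Suc i < length xs \<longrightarrow> (xs ! i, xs ! Suc i) \<in> E)"

definition ipath :: "'a set \<Rightarrow> ('a \<times> 'a) set \<Rightarrow> (nat \<Rightarrow> 'a) \<Rightarrow> bool" where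
  "ipath V E f \<longleftrightarrow> (\<forall>i. f i \<in> V \<and> (f i, f (Suc i)) \<in> E)"

text \<open>A maximal finite path ends in a node without successor; infinite paths are maximal.\<close>

definition maxfpath :: "'a set \<Rightarrow> ('a \<times> 'a) set \<Rightarrow> 'a list \<Rightarrow> bool" where
  "maxfpath V E xs \<longleftrightarrow> fpath V E xs \<and> E `` {last xs} = {}"

definition on_all_max_paths :: "'a set \<Rightarrow> ('a \<times> 'a) set \<Rightarrow> 'a \<Rightarrow> 'a \<Rightarrow> bool" where
  "on_all_max_paths V E x n \<longleftrightarrow>
     (\<forall>xs. maxfpath V E xs \<and> hd xs = x \<longrightarrow> n \<in> set xs) \<and>
     (\<forall>f. ipath V E f \<and> f 0 = x \<longrightarrow> n \<in> range f)"

definition Vp :: "'a set \<Rightarrow> ('a \<times> 'a) set \<Rightarrow> 'a \<Rightarrow> 'a set" where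
  "Vp V E p = {n \<in> V. on_all_max_paths V E p n}"

definition interval :: "'a set \<Rightarrow> ('a \<times> 'a) set \<Rightarrow> 'a set \<Rightarrow> 'a \<Rightarrow> 'a \<Rightarrow> bool" where
  "interval V E V' x y \<longleftrightarrow> (\<exists>xs. fpath V E xs \<and> length xs \<ge> 2 \<and> hd xs = x \<and> last xs = y \<and>
      x \<in> V' \<and> y \<in> V' \<and> (\<forall>i. 0 < i \<and> i < length xs - 1 \<longrightarrow> xs ! i \<notin> V'))"

definition Ap_edges :: "'a set \<Rightarrow> ('a \<times> 'a) set \<Rightarrow> 'a \<Rightarrow> ('a \<times> 'a) set" where
  "Ap_edges V E p = {(x, y). x \<in> Vp V E p \<and> y \<in> Vp V E p \<and> interval V E (Vp V E p) x y}"

text \<open>An unfolding of the cycle C (subgraph of A_p induced by Vp - {p}).\<close>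

definition is_unfolding :: "'a set \<Rightarrow> ('a \<times> 'a) set \<Rightarrow> 'a \<Rightarrow> 'a list \<Rightarrow> bool" where
  "is_unfolding V E p w \<longleftrightarrow> w \<noteq> [] \<and> distinct w \<and> set w = Vp V E p - {p} \<and>
     (\<forall>i. Suc i < length w \<longrightarrow> (w ! i, w ! Suc i) \<in> Ap_edges V E p)"

definition Vsucc :: "'a set \<Rightarrow> ('a \<times> 'a) set \<Rightarrow> 'a \<Rightarrow> 'a \<Rightarrow> 'a set" where
  "Vsucc V E p s = {n \<in> Vp V E p. \<exists>xs. fpath V E xs \<and> hd xs = s \<and> last xs = n \<and>
      (\<forall>i. i < length xs - 1 \<longrightarrow> xs ! i \<notin> Vp V E p)}"

definition DOD :: "'a set \<Rightarrow> ('a \<times> 'a) set \<Rightarrow> 'a \<Rightarrow> 'a \<Rightarrow> 'a \<Rightarrow> 'a \<Rightarrow> 'a \<Rightarrow> bool" where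
  "DOD V E p s1 s2 a b \<longleftrightarrow> distinct [p, a, b] \<and>
     on_all_max_paths V E p a \<and> on_all_max_paths V E p b \<and>
     (\<forall>xs. maxfpath V E xs \<and> hd xs = s1 \<longrightarrow>
        (\<exists>i < length xs. xs ! i = a \<and> (\<forall>j < i. xs ! j \<noteq> b))) \<and>
     (\<forall>f. ipath V E f \<and> f 0 = s1 \<longrightarrow> (\<exists>i. f i = a \<and> (\<forall>j < i. f j \<noteq> b))) \<and>
     (\<forall>xs. maxfpath V E xs \<and> hd xs = s2 \<longrightarrow>
        (\<exists>i < length xs. xs ! i = b \<and> (\<forall>j < i. xs ! j \<noteq> a))) \<and>
     (\<forall>f. ipath V E f \<and> f 0 = s2 \<longrightarrow> (\<exists>i. f i = b \<and> (\<forall>j < i. f j \<noteq> a)))"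

definition letters :: "'a set \<Rightarrow> 'a list set" where
  "letters S = {[x] | x. x \<in> S}"

definition lconc :: "'a list set \<Rightarrow> 'a list set \<Rightarrow> 'a list set" (infixr "\<cdot>\<cdot>" 75) where
  "lconc L M = {xs @ ys | xs ys. xs \<in> L \<and> ys \<in> M}"

inductive_set lstar :: "'a list set \<Rightarrow> 'a list set" for L :: "'a list set" where
  lstar_Nil: "[] \<in> lstar L"
| lstar_app: "xs \<in> L \<Longrightarrow> ys \<in> lstar L \<Longrightarrow> xs @ ys \<in> lstar L"

end

theory Submission
  imports Defs
begin
definition upath :: "'a set \<Rightarrow> ('a \<times> 'a) set \<Rightarrow> (nat \<Rightarrow> 'a) \<Rightarrow> bool" where
  "upath V E f \<longleftrightarrow> (\<forall>i. f i \<in> V \<and> ((f i, f (Suc i)) \<in> E \<or> (E `` {f i} = {} \<and> f (Suc i) = f i)))"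

lemma upath_V: "upath V E f \<Longrightarrow> f i \<in> V"
  by (simp add: upath_def)

lemma upath_shift: "upath V E f \<Longrightarrow> upath V E (\<lambda>i. f (i + k))"
  unfolding upath_def by simp

lemma upath_sink: assumes "upath V E f" "E `` {f j} = {}" "j \<le> k" shows "f k = f j"
  using assms(3)
proof (induction k)
  case 0 then show ?case by simp
next
  case (Suc k)
  show ?case
  proof (cases "j = Suc k")
    case True then show ?thesis by simp
  next
    case False
    then have "j \<le> k" using Suc by simp
    then have "f k = f j" using Suc by simp
    then have "E `` {f k} = {}" using assms(2) by simp
    moreover have "(f k, f (Suc k)) \<in> E \<or> (E `` {f k} = {} \<and> f (Suc k) = f k)"
      using assms(1) unfolding upath_def by simp
    ultimately show ?thesis using \<open>f k = f j\<close> by auto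
  qed
qed

lemma upath_edge: "upath V E f \<Longrightarrow> E `` {f j} \<noteq> {} \<Longrightarrow> (f j, f (Suc j)) \<in> E"
  unfolding upath_def by metis

lemma ipath_upath: "ipath V E f \<Longrightarrow> upath V E f"
  unfolding ipath_def upath_def by simp

lemma fpath_nth_V: "fpath V E xs \<Longrightarrow> i < length xs \<Longrightarrow> xs ! i \<in> V"
  unfolding fpath_def by auto

lemma min_len: "xs \<noteq> [] \<Longrightarrow> min i (length xs - 1) < length xs"
  by (cases xs) auto

lemma maxfpath_upath:
  assumes "maxfpath V E xs"
  shows "upath V E (\<lambda>i. xs ! min i (length xs - 1))"
proof -
  have ne: "xs \<noteq> []" and fp: "fpath V E xs" and sink: "E `` {last xs} = {}"
    using assms unfolding maxfpath_def fpath_def by auto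
  show ?thesis unfolding upath_def
  proof
    fix i
    have "min i (length xs - 1) < length xs" using ne by (rule min_len)
    then have "xs ! min i (length xs - 1) \<in> V" using fp by (intro fpath_nth_V)
    moreover have "(xs ! min i (length xs - 1), xs ! min (Suc i) (length xs - 1)) \<in> E \<or>
      (E `` {xs ! min i (length xs - 1)} = {} \<and> xs ! min (Suc i) (length xs - 1) = xs ! min i (length xs - 1))"
    proof (cases "Suc i < length xs")
      case True
      then have "(xs ! i, xs ! Suc i) \<in> E" using fp unfolding fpath_def by blast
      moreover have "min i (length xs - 1) = i" "min (Suc i) (length xs - 1) = Suc i" using True by auto
      ultimately show ?thesis by simp
    next
      case False
      then have "min i (length xs - 1) = length xs - 1" "min (Suc i) (length xs - 1) = length xs - 1" by auto
      then show ?thesis using sink ne by (simp add: last_conv_nth)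
    qed
    ultimately show "xs ! min i (length xs - 1) \<in> V \<and> ((xs ! min i (length xs - 1), xs ! min (Suc i) (length xs - 1)) \<in> E \<or>
      (E `` {xs ! min i (length xs - 1)} = {} \<and> xs ! min (Suc i) (length xs - 1) = xs ! min i (length xs - 1)))" by blast
  qed
qed

lemma upath_prefix_fpath:
  assumes "upath V E f" "\<And>j. j < t \<Longrightarrow> E `` {f j} \<noteq> {}"
  shows "fpath V E (map f [0..<Suc t])"
  unfolding fpath_def
proof (intro conjI allI impI)
  show "map f [0..<Suc t] \<noteq> []" by simp
  show "set (map f [0..<Suc t]) \<subseteq> V" using assms(1) upath_V by fastforce
  fix i assume "Suc i < length (map f [0..<Suc t])"
  then have "i < t" by simp
  then have "(f i, f (Suc i)) \<in> E" using assms upath_edge by blast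
  then show "(map f [0..<Suc t] ! i, map f [0..<Suc t] ! Suc i) \<in> E"
    using \<open>i < t\<close> by (simp add: nth_append del: upt_Suc)
qed

lemma upath_cases:
  assumes "upath V E f"
  shows "ipath V E f \<or> (\<exists>t. maxfpath V E (map f [0..<Suc t]) \<and> (\<forall>k\<ge>t. f k = f t))"
proof (cases "\<exists>j. E `` {f j} = {}")
  case False
  then have "ipath V E f" using assms unfolding ipath_def upath_def by blast
  then show ?thesis by blast
next
  case True
  define t where "t = (LEAST j. E `` {f j} = {})"
  have t1: "E `` {f t} = {}" unfolding t_def using True by (meson LeastI)
  have t2: "\<And>j. j < t \<Longrightarrow> E `` {f j} \<noteq> {}" unfolding t_def using not_less_Least by blast
  have "fpath V E (map f [0..<Suc t])" using upath_prefix_fpath[OF assms t2] by blast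
  moreover have "last (map f [0..<Suc t]) = f t" by simp
  ultimately have "maxfpath V E (map f [0..<Suc t])" using t1 unfolding maxfpath_def by simp
  moreover have "\<forall>k\<ge>t. f k = f t" using upath_sink[OF assms t1] by blast
  ultimately show ?thesis by blast
qed

lemma on_all_upath:
  "on_all_max_paths V E x n \<longleftrightarrow> (\<forall>f. upath V E f \<and> f 0 = x \<longrightarrow> n \<in> range f)"
proof
  assume H: "on_all_max_paths V E x n"
  show "\<forall>f. upath V E f \<and> f 0 = x \<longrightarrow> n \<in> range f"
  proof (intro allI impI)
    fix f assume F: "upath V E f \<and> f 0 = x"
    have "ipath V E f \<or> (\<exists>t. maxfpath V E (map f [0..<Suc t]) \<and> (\<forall>k\<ge>t. f k = f t))"
      using upath_cases F by blast
    then show "n \<in> range f"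
    proof
      assume "ipath V E f" then show ?thesis using H F unfolding on_all_max_paths_def by blast
    next
      assume "\<exists>t. maxfpath V E (map f [0..<Suc t]) \<and> (\<forall>k\<ge>t. f k = f t)"
      then obtain t where "maxfpath V E (map f [0..<Suc t])" by blast
      moreover have "hd (map f [0..<Suc t]) = x" using F by (simp add: hd_map del: upt_Suc)
      ultimately have "n \<in> set (map f [0..<Suc t])" using H unfolding on_all_max_paths_def by blast
      then show ?thesis by auto
    qed
  qed
next
  assume H: "\<forall>f. upath V E f \<and> f 0 = x \<longrightarrow> n \<in> range f"
  show "on_all_max_paths V E x n" unfolding on_all_max_paths_def
  proof (intro conjI allI impI)
    fix xs assume X: "maxfpath V E xs \<and> hd xs = x"
    then have ne: "xs \<noteq> []" unfolding maxfpath_def fpath_def by auto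
    let ?g = "\<lambda>i. xs ! min i (length xs - 1)"
    have "upath V E ?g" using X maxfpath_upath by blast
    moreover have "?g 0 = x" using X ne by (simp add: hd_conv_nth)
    ultimately obtain i where "n = ?g i" using H by blast
    then show "n \<in> set xs" using min_len[OF ne] by simp
  next
    fix f assume "ipath V E f \<and> f 0 = x"
    then show "n \<in> range f" using H ipath_upath by blast
  qed
qed

lemma order_upath:
  "((\<forall>xs. maxfpath V E xs \<and> hd xs = s \<longrightarrow> (\<exists>i < length xs. xs ! i = a \<and> (\<forall>j < i. xs ! j \<noteq> b))) \<and>
    (\<forall>f. ipath V E f \<and> f 0 = s \<longrightarrow> (\<exists>i. f i = a \<and> (\<forall>j < i. f j \<noteq> b))))
   \<longleftrightarrow> (\<forall>f. upath V E f \<and> f 0 = s \<longrightarrow> (\<exists>i. f i = a \<and> (\<forall>j < i. f j \<noteq> b)))"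
proof
  assume H: "(\<forall>xs. maxfpath V E xs \<and> hd xs = s \<longrightarrow> (\<exists>i < length xs. xs ! i = a \<and> (\<forall>j < i. xs ! j \<noteq> b))) \<and>
    (\<forall>f. ipath V E f \<and> f 0 = s \<longrightarrow> (\<exists>i. f i = a \<and> (\<forall>j < i. f j \<noteq> b)))"
  show "\<forall>f. upath V E f \<and> f 0 = s \<longrightarrow> (\<exists>i. f i = a \<and> (\<forall>j < i. f j \<noteq> b))"
  proof (intro allI impI)
    fix f assume F: "upath V E f \<and> f 0 = s"
    have "ipath V E f \<or> (\<exists>t. maxfpath V E (map f [0..<Suc t]) \<and> (\<forall>k\<ge>t. f k = f t))"
      using upath_cases F by blast
    then show "\<exists>i. f i = a \<and> (\<forall>j < i. f j \<noteq> b)"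
    proof
      assume "ipath V E f" then show ?thesis using H F by blast
    next
      assume "\<exists>t. maxfpath V E (map f [0..<Suc t]) \<and> (\<forall>k\<ge>t. f k = f t)"
      then obtain t where M: "maxfpath V E (map f [0..<Suc t])" by blast
      moreover have "hd (map f [0..<Suc t]) = s" using F by (simp add: hd_map del: upt_Suc)
      ultimately obtain i where I: "i < Suc t" "map f [0..<Suc t] ! i = a"
        "\<forall>j<i. map f [0..<Suc t] ! j \<noteq> b"
        using H by (metis length_map length_upt diff_zero)
      have eq: "\<And>j. j < Suc t \<Longrightarrow> map f [0..<Suc t] ! j = f j"
        by (simp del: upt_Suc)
      have "f i = a" using I eq by simp
      moreover have "\<forall>j<i. f j \<noteq> b" using I eq \<open>i < Suc t\<close> by (metis order.strict_trans)
      ultimately show ?thesis by blast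
    qed
  qed
next
  assume H: "\<forall>f. upath V E f \<and> f 0 = s \<longrightarrow> (\<exists>i. f i = a \<and> (\<forall>j < i. f j \<noteq> b))"
  show "(\<forall>xs. maxfpath V E xs \<and> hd xs = s \<longrightarrow> (\<exists>i < length xs. xs ! i = a \<and> (\<forall>j < i. xs ! j \<noteq> b))) \<and>
    (\<forall>f. ipath V E f \<and> f 0 = s \<longrightarrow> (\<exists>i. f i = a \<and> (\<forall>j < i. f j \<noteq> b)))"
  proof (intro conjI allI impI)
    fix xs assume X: "maxfpath V E xs \<and> hd xs = s"
    then have ne: "xs \<noteq> []" unfolding maxfpath_def fpath_def by auto
    let ?g = "\<lambda>i. xs ! min i (length xs - 1)"
    have "upath V E ?g" using X maxfpath_upath by blast
    moreover have "?g 0 = s" using X ne by (simp add: hd_conv_nth)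
    ultimately obtain i where I: "?g i = a" "\<forall>j<i. ?g j \<noteq> b" using H by blast
    define i' where "i' = min i (length xs - 1)"
    have "i' < length xs" using min_len[OF ne] unfolding i'_def by simp
    moreover have "xs ! i' = a" using I unfolding i'_def by simp
    moreover have "\<forall>j<i'. xs ! j \<noteq> b"
    proof (intro allI impI)
      fix j assume "j < i'"
      then have "j < i" "min j (length xs - 1) = j" unfolding i'_def by auto
      then show "xs ! j \<noteq> b" using I by metis
    qed
    ultimately show "\<exists>i < length xs. xs ! i = a \<and> (\<forall>j < i. xs ! j \<noteq> b)" by blast
  next
    fix f assume "ipath V E f \<and> f 0 = s"
    then show "\<exists>i. f i = a \<and> (\<forall>j < i. f j \<noteq> b)" using H ipath_upath by blast
  qed
qed

lemma fpath_succ: "fpath V E xs \<longleftrightarrow> xs \<noteq> [] \<and> set xs \<subseteq> V \<and> successively (\<lambda>x y. (x, y) \<in> E) xs"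
  unfolding fpath_def successively_conv_nth by blast

lemma fpath_join:
  assumes "fpath V E xs" "fpath V E ys" "last xs = hd ys"
  shows "fpath V E (xs @ tl ys)" "hd (xs @ tl ys) = hd xs" "last (xs @ tl ys) = last ys"
    "set (xs @ tl ys) = set xs \<union> set ys"
proof -
  have ne: "xs \<noteq> []" "ys \<noteq> []" using assms unfolding fpath_def by auto
  have ys: "ys = hd ys # tl ys" using ne by simp
  have s1: "successively (\<lambda>x y. (x, y) \<in> E) xs" "successively (\<lambda>x y. (x, y) \<in> E) ys"
    using assms fpath_succ by blast+
  have "successively (\<lambda>x y. (x, y) \<in> E) (hd ys # tl ys)" using s1(2) ys by simp
  then have s2: "tl ys = [] \<or> ((hd ys, hd (tl ys)) \<in> E \<and> successively (\<lambda>x y. (x, y) \<in> E) (tl ys))"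
    by (simp only: successively_Cons)
  have "successively (\<lambda>x y. (x, y) \<in> E) (xs @ tl ys)"
  proof (cases "tl ys = []")
    case True then show ?thesis using s1(1) by simp
  next
    case False
    then show ?thesis unfolding successively_append_iff using s1(1) s2 assms(3) by simp
  qed
  moreover have "set (xs @ tl ys) = set xs \<union> set ys"
  proof -
    have "set ys = insert (hd ys) (set (tl ys))" using ne by (cases ys) auto
    moreover have "last xs \<in> set xs" using ne by simp
    then have "hd ys \<in> set xs" using assms(3) by simp
    ultimately show ?thesis by auto
  qed
  moreover have "set xs \<subseteq> V" "set ys \<subseteq> V" using assms unfolding fpath_def by auto
  ultimately show "fpath V E (xs @ tl ys)" "set (xs @ tl ys) = set xs \<union> set ys"
    unfolding fpath_succ using ne by auto
  show "hd (xs @ tl ys) = hd xs" using ne by simp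
  show "last (xs @ tl ys) = last ys"
    using ne(2) assms(3) by (cases ys) (simp_all add: last_append)
qed

lemma fpath_drop:
  assumes "fpath V E xs" "k < length xs"
  shows "fpath V E (drop k xs)" "hd (drop k xs) = xs ! k" "last (drop k xs) = last xs"
proof -
  have "successively (\<lambda>x y. (x, y) \<in> E) xs" using assms(1) unfolding fpath_succ by blast
  then have "successively (\<lambda>x y. (x, y) \<in> E) (take k xs @ drop k xs)" by simp
  then have "successively (\<lambda>x y. (x, y) \<in> E) (drop k xs)" unfolding successively_append_iff by blast
  moreover have "drop k xs \<noteq> []" using assms by simp
  moreover have "set (drop k xs) \<subseteq> V" using assms(1) set_drop_subset unfolding fpath_def by fastforce
  ultimately show "fpath V E (drop k xs)" unfolding fpath_succ by blast
  show "hd (drop k xs) = xs ! k" using assms(2) by (simp add: hd_drop_conv_nth)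
  show "last (drop k xs) = last xs" using assms(2) by simp
qed

definition pre :: "'a list \<Rightarrow> (nat \<Rightarrow> 'a) \<Rightarrow> nat \<Rightarrow> 'a" where
  "pre xs f = (\<lambda>i. if i < length xs - 1 then xs ! i else f (i - (length xs - 1)))"

lemma pre_props:
  assumes "fpath V E xs" "upath V E f" "last xs = f 0"
  shows "upath V E (pre xs f)" "pre xs f 0 = hd xs" "range (pre xs f) = set xs \<union> range f"
    "\<And>i. pre xs f (i + (length xs - 1)) = f i"
proof -
  have ne: "xs \<noteq> []" using assms unfolding fpath_def by auto
  let ?m = "length xs - 1"
  have lastn: "xs ! ?m = f 0" using assms(3) ne by (simp add: last_conv_nth)
  show "upath V E (pre xs f)" unfolding upath_def
  proof
    fix i
    show "pre xs f i \<in> V \<and> ((pre xs f i, pre xs f (Suc i)) \<in> E \<or>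
        (E `` {pre xs f i} = {} \<and> pre xs f (Suc i) = pre xs f i))"
    proof (cases "i < ?m")
      case True
      have "xs ! i \<in> V" using assms(1) True by (intro fpath_nth_V) auto
      moreover have "(xs ! i, xs ! Suc i) \<in> E" using assms(1) True unfolding fpath_def by auto
      moreover have "pre xs f (Suc i) = xs ! Suc i"
      proof (cases "Suc i < ?m")
        case True then show ?thesis unfolding pre_def by simp
      next
        case False then have "Suc i = ?m" using \<open>i < ?m\<close> by simp
        then show ?thesis using lastn unfolding pre_def by simp
      qed
      ultimately show ?thesis using True unfolding pre_def by simp
    next
      case False
      then have "pre xs f i = f (i - ?m)" "pre xs f (Suc i) = f (Suc (i - ?m))"
        unfolding pre_def by (auto simp: Suc_diff_le)
      then show ?thesis using assms(2) unfolding upath_def by simp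
    qed
  qed
  show "pre xs f 0 = hd xs"
    using ne lastn unfolding pre_def by (auto simp: hd_conv_nth)
  show "\<And>i. pre xs f (i + ?m) = f i" unfolding pre_def by simp
  show "range (pre xs f) = set xs \<union> range f"
  proof
    show "range (pre xs f) \<subseteq> set xs \<union> range f" unfolding pre_def by auto
    show "set xs \<union> range f \<subseteq> range (pre xs f)"
    proof
      fix x assume "x \<in> set xs \<union> range f"
      then show "x \<in> range (pre xs f)"
      proof
        assume "x \<in> set xs"
        then obtain j where j: "j < length xs" "xs ! j = x" by (auto simp: in_set_conv_nth)
        show ?thesis
        proof (cases "j < ?m")
          case True then have "pre xs f j = x" using j unfolding pre_def by simp
          then show ?thesis by (metis rangeI)
        next
          case False then have "j = ?m" using j by simp
          then have "pre xs f ?m = x" using j lastn unfolding pre_def by simp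
          then show ?thesis by (metis rangeI)
        qed
      next
        assume "x \<in> range f"
        then obtain j where "x = f j" by auto
        then have "pre xs f (j + ?m) = x" unfolding pre_def by simp
        then show ?thesis by (metis rangeI)
      qed
    qed
  qed
qed

definition cyc :: "'a list \<Rightarrow> nat \<Rightarrow> 'a" where
  "cyc c = (\<lambda>i. c ! (i mod (length c - 1)))"

lemma cyc_props:
  assumes "fpath V E c" "length c \<ge> 2" "hd c = last c"
  shows "upath V E (cyc c)" "cyc c 0 = hd c" "range (cyc c) = set c"
proof -
  let ?m = "length c - 1"
  have m: "?m \<ge> 1" using assms by simp
  have ne: "c \<noteq> []" using assms by auto
  have hl: "c ! ?m = c ! 0" using assms(3) ne by (simp add: last_conv_nth hd_conv_nth)
  show "upath V E (cyc c)" unfolding upath_def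
  proof
    fix i
    let ?k = "i mod ?m"
    have k: "?k < ?m" using m by simp
    have "c ! ?k \<in> V" using assms(1) k by (intro fpath_nth_V) auto
    moreover have "(c ! ?k, c ! (Suc i mod ?m)) \<in> E"
    proof (cases "Suc ?k = ?m")
      case True
      then have "Suc i mod ?m = 0" by (simp add: mod_Suc)
      moreover have "(c ! ?k, c ! Suc ?k) \<in> E" using assms(1) k unfolding fpath_def by auto
      ultimately show ?thesis using True hl by simp
    next
      case False
      then have "Suc i mod ?m = Suc ?k" by (simp add: mod_Suc)
      moreover have "(c ! ?k, c ! Suc ?k) \<in> E" using assms(1) k unfolding fpath_def by auto
      ultimately show ?thesis by simp
    qed
    ultimately show "cyc c i \<in> V \<and> ((cyc c i, cyc c (Suc i)) \<in> E \<or>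
        (E `` {cyc c i} = {} \<and> cyc c (Suc i) = cyc c i))" unfolding cyc_def by simp
  qed
  show "cyc c 0 = hd c" unfolding cyc_def using ne by (simp add: hd_conv_nth)
  show "range (cyc c) = set c"
  proof
    have "x mod ?m < length c" for x
    proof -
      have "x mod ?m < ?m" using m by simp
      then show ?thesis by arith
    qed
    then show "range (cyc c) \<subseteq> set c" unfolding cyc_def by auto
    show "set c \<subseteq> range (cyc c)"
    proof
      fix x assume "x \<in> set c"
      then obtain j where j: "j < length c" "c ! j = x" by (auto simp: in_set_conv_nth)
      show "x \<in> range (cyc c)"
      proof (cases "j < ?m")
        case True then have "cyc c j = x" using j unfolding cyc_def by simp
        then show ?thesis by (metis rangeI)
      next
        case False then have "j = ?m" using j by simp
        then have "cyc c 0 = x" using j hl unfolding cyc_def by simp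
        then show ?thesis by (metis rangeI)
      qed
    qed
  qed
qed

fun gen :: "('a \<times> 'a) set \<Rightarrow> 'a \<Rightarrow> nat \<Rightarrow> 'a" where
  "gen E x 0 = x"
| "gen E x (Suc i) = (if E `` {gen E x i} = {} then gen E x i else (SOME z. (gen E x i, z) \<in> E))"

lemma gen_upath:
  assumes "E \<subseteq> V \<times> V" "x \<in> V"
  shows "upath V E (gen E x)" "gen E x 0 = x"
proof -
  have edge: "(gen E x i, gen E x (Suc i)) \<in> E" if ne: "E `` {gen E x i} \<noteq> {}" for i
  proof -
    have "\<exists>z. (gen E x i, z) \<in> E" using ne by blast
    then have "(gen E x i, SOME z. (gen E x i, z) \<in> E) \<in> E" by (rule someI_ex)
    then show ?thesis using ne by simp
  qed
  have inV: "gen E x i \<in> V" for i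
  proof (induction i)
    case 0 then show ?case using assms by simp
  next
    case (Suc i)
    show ?case
    proof (cases "E `` {gen E x i} = {}")
      case True then show ?thesis using Suc by simp
    next
      case False then show ?thesis using edge assms(1) by blast
    qed
  qed
  show "upath V E (gen E x)" unfolding upath_def
  proof
    fix i show "gen E x i \<in> V \<and> ((gen E x i, gen E x (Suc i)) \<in> E \<or>
        (E `` {gen E x i} = {} \<and> gen E x (Suc i) = gen E x i))"
      using inV edge by (cases "E `` {gen E x i} = {}") auto
  qed
  show "gen E x 0 = x" by simp
qed

lemma upath_exists: "E \<subseteq> V \<times> V \<Longrightarrow> x \<in> V \<Longrightarrow> \<exists>f. upath V E f \<and> f 0 = x"
  by (rule exI[of _ "gen E x"]) (simp add: gen_upath)

lemma upath_prefix_least: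
  assumes "upath V E f" "\<And>j. j < t \<Longrightarrow> f j \<noteq> f t"
  shows "fpath V E (map f [0..<Suc t])"
proof (rule upath_prefix_fpath[OF assms(1)])
  fix j assume "j < t"
  show "E `` {f j} \<noteq> {}"
  proof
    assume "E `` {f j} = {}"
    then have "f t = f j" using upath_sink[OF assms(1), of j t] \<open>j < t\<close> by linarith
    then show False using assms(2)[OF \<open>j < t\<close>] by simp
  qed
qed

lemma map_upt_props:
  "hd (map f [0..<Suc t]) = f 0" "last (map f [0..<Suc t]) = f t"
  "\<And>i. i < Suc t \<Longrightarrow> map f [0..<Suc t] ! i = f i" "length (map f [0..<Suc t]) = Suc t"
  "set (map f [0..<Suc t]) = f ` {..t}"
proof -
  show "hd (map f [0..<Suc t]) = f 0" by (simp add: hd_map del: upt_Suc)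
  show "last (map f [0..<Suc t]) = f t" by simp
  show "\<And>i. i < Suc t \<Longrightarrow> map f [0..<Suc t] ! i = f i" by (simp del: upt_Suc)
  show "length (map f [0..<Suc t]) = Suc t" by simp
  show "set (map f [0..<Suc t]) = f ` {..t}" by (simp add: atLeast0LessThan lessThan_Suc_atMost del: upt_Suc)
qed

lemma upath_cons:
  assumes "upath V E f" "(x, f 0) \<in> E" "x \<in> V"
  shows "upath V E (\<lambda>i. if i = 0 then x else f (i - 1))"
  unfolding upath_def
proof
  fix i show "(if i = 0 then x else f (i - 1)) \<in> V \<and>
         (((if i = 0 then x else f (i - 1)), (if Suc i = 0 then x else f (Suc i - 1))) \<in> E \<or>
          E `` {(if i = 0 then x else f (i - 1))} = {} \<and> (if Suc i = 0 then x else f (Suc i - 1)) = (if i = 0 then x else f (i - 1)))"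
  proof (cases i)
    case 0 then show ?thesis using assms by simp
  next
    case (Suc j) then show ?thesis using assms(1) unfolding upath_def by simp
  qed
qed

lemma set_drop_nth: "x \<in> set (drop k xs) \<Longrightarrow> \<exists>i. k \<le> i \<and> i < length xs \<and> xs ! i = x"
proof -
  assume "x \<in> set (drop k xs)"
  then obtain i where "i < length (drop k xs)" "drop k xs ! i = x" by (auto simp: in_set_conv_nth)
  then show ?thesis by (intro exI[of _ "k + i"]) auto
qed

lemma GL:
  assumes fa1: "fpath V E a1" and fa2: "fpath V E a2" and fpi: "fpath V E pi" and fb: "fpath V E be"
    and h1: "hd a1 = z" and h2: "hd a2 = z" and l1: "last a1 = u1" and l2: "last a2 = u2"
    and hpi: "hd pi = u1" and lpi: "last pi = y" and hb: "hd be = y" and lb: "last be = z"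
    and len1: "length a1 \<ge> 2" and len2: "length a2 \<ge> 2"
    and s1: "set a1 \<subseteq> {z, u1} \<union> N" and s2: "set a2 \<subseteq> {z, u2} \<union> N"
    and sb: "set be \<subseteq> {y, z} \<union> N" and n1: "u1 \<notin> N" and n2: "u2 \<notin> N" and u12: "u1 \<noteq> u2"
    and zy: "z \<in> {u1, u2} \<Longrightarrow> z = y"
  shows "\<exists>c. fpath V E c \<and> length c \<ge> 2 \<and> hd c = z \<and> last c = z \<and> (u1 \<notin> set c \<or> u2 \<notin> set c)"
proof -
  have pine: "pi \<noteq> []" using fpi unfolding fpath_def by simp
  define L where "L = length pi - 1"
  have L: "L < length pi" "pi ! L = y" using pine lpi unfolding L_def by (auto simp: last_conv_nth)
  define J where "J = {i. i < length pi \<and> pi ! i = u1}"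
  have finJ: "finite J" unfolding J_def by simp
  have "0 \<in> J" unfolding J_def using pine hpi by (simp add: hd_conv_nth)
  then have neJ: "J \<noteq> {}" by blast
  define j where "j = Max J"
  have jJ: "j \<in> J" unfolding j_def using finJ neJ by simp
  then have j: "j < length pi" "pi ! j = u1" unfolding J_def by auto
  have jmax: "\<And>i. i < length pi \<Longrightarrow> pi ! i = u1 \<Longrightarrow> i \<le> j"
    unfolding j_def using finJ by (simp add: J_def)
  have jL: "j \<le> L" using j unfolding L_def by simp
  have join: "\<And>xs ys. fpath V E xs \<Longrightarrow> fpath V E ys \<Longrightarrow> last xs = hd ys \<Longrightarrow>
      fpath V E (xs @ tl ys) \<and> hd (xs @ tl ys) = hd xs \<and> last (xs @ tl ys) = last ys \<and>
      set (xs @ tl ys) = set xs \<union> set ys \<and> length (xs @ tl ys) \<ge> length xs"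
    using fpath_join by fastforce
  show ?thesis
  proof (cases "\<exists>k. j < k \<and> k < length pi \<and> pi ! k = u2")
    case True
    then obtain k where k: "j < k" "k < length pi" "pi ! k = u2" by blast
    have yu1: "y \<noteq> u1"
    proof
      assume "y = u1"
      then have "L \<le> j" using jmax L by simp
      then show False using k unfolding L_def by simp
    qed
    have zu1: "z \<noteq> u1" using zy yu1 by auto
    have d: "fpath V E (drop k pi)" "hd (drop k pi) = u2" "last (drop k pi) = y"
      using fpath_drop[OF fpi k(2)] k lpi by auto
    obtain c1 where c1: "c1 = a2 @ tl (drop k pi)" by blast
    have C1: "fpath V E c1" "hd c1 = z" "last c1 = y" "set c1 = set a2 \<union> set (drop k pi)" "length c1 \<ge> 2"
      using join[OF fa2 d(1)] d l2 h2 len2 c1 by auto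
    obtain c where c: "c = c1 @ tl be" by blast
    have C: "fpath V E c" "hd c = z" "last c = z" "set c = set c1 \<union> set be" "length c \<ge> 2"
      using join[OF C1(1) fb] C1 hb lb c by auto
    have "u1 \<notin> set (drop k pi)"
    proof
      assume "u1 \<in> set (drop k pi)"
      then obtain i where "k \<le> i" "i < length pi" "pi ! i = u1" using set_drop_nth by metis
      then show False using jmax k by fastforce
    qed
    moreover have "u1 \<notin> set a2" using s2 zu1 u12 n1 by blast
    moreover have "u1 \<notin> set be" using sb yu1 zu1 n1 by blast
    ultimately have "u1 \<notin> set c" using C C1 by simp
    then show ?thesis using C by blast
  next
    case False
    have zu2: "z \<noteq> u2"
    proof
      assume "z = u2"
      then have "y = u2" using zy by simp
      show False
      proof (cases "j < L")
        case True then show False using False L \<open>y = u2\<close> by blast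
      next
        case False then have "j = L" using jL by simp
        then show False using j L \<open>y = u2\<close> u12 by simp
      qed
    qed
    have yu2: "y \<noteq> u2"
    proof
      assume "y = u2"
      show False
      proof (cases "j < L")
        case True then show False using False L \<open>y = u2\<close> by blast
      next
        case False then have "j = L" using jL by simp
        then show False using j L \<open>y = u2\<close> u12 by simp
      qed
    qed
    have d: "fpath V E (drop j pi)" "hd (drop j pi) = u1" "last (drop j pi) = y"
      using fpath_drop[OF fpi j(1)] j lpi by auto
    obtain c1 where c1: "c1 = a1 @ tl (drop j pi)" by blast
    have C1: "fpath V E c1" "hd c1 = z" "last c1 = y" "set c1 = set a1 \<union> set (drop j pi)" "length c1 \<ge> 2"
      using join[OF fa1 d(1)] d l1 h1 len1 c1 by auto
    obtain c where c: "c = c1 @ tl be" by blast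
    have C: "fpath V E c" "hd c = z" "last c = z" "set c = set c1 \<union> set be" "length c \<ge> 2"
      using join[OF C1(1) fb] C1 hb lb c by auto
    have "u2 \<notin> set (drop j pi)"
    proof
      assume "u2 \<in> set (drop j pi)"
      then obtain i where i: "j \<le> i" "i < length pi" "pi ! i = u2" using set_drop_nth by metis
      show False
      proof (cases "i = j")
        case True then show False using i j u12 by simp
      next
        case False then show False using i \<open>\<not> (\<exists>k. j < k \<and> k < length pi \<and> pi ! k = u2)\<close> by auto
      qed
    qed
    moreover have "u2 \<notin> set a1" using s1 zu2 u12 n2 by blast
    moreover have "u2 \<notin> set be" using sb yu2 zu2 n2 by blast
    ultimately have "u2 \<notin> set c" using C C1 by simp
    then show ?thesis using C by blast
  qed
qed

locale S =
  fixes V :: "'a set" and E :: "('a \<times> 'a) set" and p s1 s2 :: 'a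
  assumes cfgA: "cfg V E" and pV: "p \<in> V" and sp: "E `` {p} = {s1, s2}" and s12: "s1 \<noteq> s2"
    and card2: "card (Ap_edges V E p `` {p}) \<ge> 2"
begin

abbreviation "W \<equiv> Vp V E p"
abbreviation "C \<equiv> Vp V E p - {p}"
abbreviation "E0 \<equiv> Vsucc V E p s1 \<union> Vsucc V E p s2"

lemma EV: "E \<subseteq> V \<times> V" using cfgA unfolding cfg_def by simp

lemma WV: "W \<subseteq> V" unfolding Vp_def by auto

lemma Wcov: "x \<in> W \<Longrightarrow> upath V E f \<Longrightarrow> f 0 = p \<Longrightarrow> x \<in> range f"
  unfolding Vp_def on_all_upath by blast

lemma pW: "p \<in> W"
proof -
  have "on_all_max_paths V E p p" unfolding on_all_upath by (metis rangeI)
  then show ?thesis using pV unfolding Vp_def by simp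
qed

lemma sV: "s \<in> {s1, s2} \<Longrightarrow> (p, s) \<in> E \<and> s \<in> V"
  using sp EV by blast

lemma VsuccW: "Vsucc V E p s \<subseteq> W" unfolding Vsucc_def by auto

lemma Ap_p: "Ap_edges V E p `` {p} \<subseteq> E0"
proof
  fix y assume "y \<in> Ap_edges V E p `` {p}"
  then have yW: "y \<in> W" and iv: "interval V E W p y" unfolding Ap_edges_def by auto
  obtain xs where xs: "fpath V E xs" "length xs \<ge> 2" "hd xs = p" "last xs = y"
    "\<forall>i. 0 < i \<and> i < length xs - 1 \<longrightarrow> xs ! i \<notin> W"
    using iv unfolding interval_def by blast
  have ne: "xs \<noteq> []" using xs by auto
  have "(xs ! 0, xs ! Suc 0) \<in> E" using xs unfolding fpath_def by auto
  then have "(p, xs ! 1) \<in> E" using xs ne by (simp add: hd_conv_nth)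
  then have s: "xs ! 1 \<in> {s1, s2}" using sp by auto
  have d: "fpath V E (drop 1 xs)" "hd (drop 1 xs) = xs ! 1" "last (drop 1 xs) = y"
    using fpath_drop[OF xs(1), of 1] xs by auto
  have "\<forall>i. i < length (drop 1 xs) - 1 \<longrightarrow> drop 1 xs ! i \<notin> W"
  proof (intro allI impI)
    fix i assume "i < length (drop 1 xs) - 1"
    then have "0 < Suc i" "Suc i < length xs - 1" by auto
    then have "xs ! Suc i \<notin> W" using xs(5) by blast
    then show "drop 1 xs ! i \<notin> W" using xs(2) by simp
  qed
  then have "y \<in> Vsucc V E p (xs ! 1)" unfolding Vsucc_def using yW d by blast
  then show "y \<in> E0" using s by blast
qed

lemma two: "\<exists>e1 e2. e1 \<in> E0 \<and> e2 \<in> E0 \<and> e1 \<noteq> e2"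
proof -
  let ?A = "Ap_edges V E p `` {p}"
  have "finite ?A" using card2 card_ge_0_finite by force
  then have "\<not> (\<forall>a1 \<in> ?A. \<forall>a2 \<in> ?A. a1 = a2)" using card2 card_le_Suc0_iff_eq by fastforce
  then show ?thesis using Ap_p by blast
qed

lemma entry_path:
  assumes "s \<in> {s1, s2}" "e \<in> Vsucc V E p s"
  shows "\<exists>\<rho>. fpath V E \<rho> \<and> length \<rho> \<ge> 2 \<and> hd \<rho> = p \<and> last \<rho> = e \<and> set \<rho> \<subseteq> {p, e} \<union> (V - W)"
proof -
  obtain xs where xs: "fpath V E xs" "hd xs = s" "last xs = e" "\<forall>i. i < length xs - 1 \<longrightarrow> xs ! i \<notin> W"
    using assms(2) unfolding Vsucc_def by blast
  have ne: "xs \<noteq> []" using xs unfolding fpath_def by simp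
  have ps: "(p, s) \<in> E" using sV assms(1) by blast
  have "successively (\<lambda>x y. (x, y) \<in> E) xs" using xs(1) unfolding fpath_succ by blast
  then have "successively (\<lambda>x y. (x, y) \<in> E) (p # xs)" using ps xs(2) ne by (simp add: successively_Cons)
  moreover have "set xs \<subseteq> V" using xs(1) unfolding fpath_def by simp
  ultimately have f: "fpath V E (p # xs)" unfolding fpath_succ using pV by simp
  have "set xs \<subseteq> {e} \<union> (V - W)"
  proof
    fix x assume "x \<in> set xs"
    then obtain i where i: "i < length xs" "xs ! i = x" by (auto simp: in_set_conv_nth)
    show "x \<in> {e} \<union> (V - W)"
    proof (cases "i = length xs - 1")
      case True then have "x = e" using i xs(3) ne by (simp add: last_conv_nth)
      then show ?thesis by simp
    next
      case False then have "i < length xs - 1" using i by simp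
      then have "x \<notin> W" using xs(4) i by blast
      moreover have "x \<in> V" using xs(1) i fpath_nth_V by metis
      ultimately show ?thesis by simp
    qed
  qed
  then have "set (p # xs) \<subseteq> {p, e} \<union> (V - W)" by auto
  moreover have "length (p # xs) \<ge> 2" using ne by (cases xs) auto
  moreover have "last (p # xs) = e" using ne xs(3) by simp
  ultimately show ?thesis using f by (intro exI[of _ "p # xs"]) simp
qed

lemma pnotE0: "p \<notin> E0"
proof
  assume "p \<in> E0"
  then obtain s where s: "s \<in> {s1, s2}" "p \<in> Vsucc V E p s" by blast
  obtain \<rho> where r: "fpath V E \<rho>" "length \<rho> \<ge> 2" "hd \<rho> = p" "last \<rho> = p" "set \<rho> \<subseteq> {p} \<union> (V - W)"
    using entry_path[OF s] by auto
  have c: "upath V E (cyc \<rho>)" "cyc \<rho> 0 = p" "range (cyc \<rho>) = set \<rho>"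
    using cyc_props[OF r(1) r(2)] r(3,4) by auto
  obtain e1 e2 where e: "e1 \<in> E0" "e2 \<in> E0" "e1 \<noteq> e2" using two by blast
  have "e1 \<in> W" "e2 \<in> W" using e VsuccW by blast+
  have "e1 \<in> range (cyc \<rho>)" using Wcov[OF \<open>e1 \<in> W\<close> c(1) c(2)] .
  then have "e1 \<in> set \<rho>" using c(3) by simp
  have "e2 \<in> range (cyc \<rho>)" using Wcov[OF \<open>e2 \<in> W\<close> c(1) c(2)] .
  then have "e2 \<in> set \<rho>" using c(3) by simp
  have "e1 = p" using r(5) \<open>e1 \<in> W\<close> \<open>e1 \<in> set \<rho>\<close> by blast
  moreover have "e2 = p" using r(5) \<open>e2 \<in> W\<close> \<open>e2 \<in> set \<rho>\<close> by blast
  ultimately show False using e by simp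
qed

lemma E0C: "E0 \<subseteq> C" using pnotE0 VsuccW by blast

lemma entry:
  assumes "s \<in> {s1, s2}" "upath V E f" "f 0 = s"
  shows "\<exists>t. f t \<in> Vsucc V E p s \<and> (\<forall>j<t. f j \<notin> W)"
proof -
  obtain e1 e2 where e: "e1 \<in> E0" "e2 \<in> E0" "e1 \<noteq> e2" using two by blast
  have e1: "e1 \<in> W" "e1 \<noteq> p" using e E0C by auto
  define g where "g = (\<lambda>i. if i = 0 then p else f (i - 1))"
  have ps: "(p, f 0) \<in> E" using sV assms(1,3) by blast
  have g: "upath V E g" using upath_cons[OF assms(2) ps pV] unfolding g_def .
  have g0: "g 0 = p" unfolding g_def by simp
  have "e1 \<in> range g" using Wcov[OF e1(1) g g0] .
  then obtain i where "g i = e1" by (metis rangeE)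
  then have "f (i - 1) = e1" using e1 unfolding g_def by (cases "i = 0") auto
  then have ex: "\<exists>t. f t \<in> W" using e1 by blast
  define t where "t = (LEAST t. f t \<in> W)"
  have t1: "f t \<in> W" unfolding t_def using ex by (metis LeastI)
  have t2: "\<And>j. j < t \<Longrightarrow> f j \<notin> W" unfolding t_def using not_less_Least by blast
  have t3: "\<And>j. j < t \<Longrightarrow> f j \<noteq> f t" using t1 t2 by metis
  have fp: "fpath V E (map f [0..<Suc t])"
    using upath_prefix_least[OF assms(2) t3] .
  have "f t \<in> Vsucc V E p s" unfolding Vsucc_def
  proof (intro CollectI conjI exI[of _ "map f [0..<Suc t]"])
    show "f t \<in> W" by (rule t1)
    show "fpath V E (map f [0..<Suc t])" by (rule fp)
    show "hd (map f [0..<Suc t]) = s" using assms(3) map_upt_props(1)[of f t] by simp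
    show "last (map f [0..<Suc t]) = f t" by (rule map_upt_props(2))
    show "\<forall>i<length (map f [0..<Suc t]) - 1. map f [0..<Suc t] ! i \<notin> W"
    proof (intro allI impI)
      fix i assume "i < length (map f [0..<Suc t]) - 1"
      then have "i < t" by simp
      then show "map f [0..<Suc t] ! i \<notin> W" using t2 map_upt_props(3)[of i t f] by simp
    qed
  qed
  then show ?thesis using t2 by blast
qed

lemma cov_entry:
  assumes "e \<in> E0" "upath V E \<sigma>" "\<sigma> 0 = e"
  shows "C \<subseteq> range \<sigma>"
proof
  fix y assume y: "y \<in> C"
  obtain s where s: "s \<in> {s1, s2}" "e \<in> Vsucc V E p s" using assms(1) by blast
  obtain \<rho> where r: "fpath V E \<rho>" "length \<rho> \<ge> 2" "hd \<rho> = p" "last \<rho> = e" "set \<rho> \<subseteq> {p, e} \<union> (V - W)"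
    using entry_path[OF s] by blast
  have pp: "upath V E (pre \<rho> \<sigma>)" "pre \<rho> \<sigma> 0 = hd \<rho>" "range (pre \<rho> \<sigma>) = set \<rho> \<union> range \<sigma>"
    using pre_props[OF r(1) assms(2)] r(4) assms(3) by auto
  have "y \<in> range (pre \<rho> \<sigma>)" using Wcov[OF _ pp(1)] pp(2) r(3) y by blast
  then have "y \<in> set \<rho> \<or> y \<in> range \<sigma>" using pp(3) by blast
  moreover have "y \<in> set \<rho> \<Longrightarrow> y = e" using r(5) y by auto
  moreover have "e \<in> range \<sigma>" using assms(3) by (metis rangeI)
  ultimately show "y \<in> range \<sigma>" by blast
qed

lemma other: "e \<in> E0 \<Longrightarrow> \<exists>e'. e' \<in> E0 \<and> e' \<noteq> e"
  using two by metis

lemma ret: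
  assumes "e \<in> E0" "upath V E \<sigma>" "\<sigma> 0 = e"
  shows "\<exists>t>0. \<sigma> t \<in> E0"
proof -
  obtain e' where e': "e' \<in> E0" "e' \<noteq> e" using other assms(1) by blast
  then have "e' \<in> range \<sigma>" using cov_entry[OF assms] E0C by blast
  then obtain t where t: "\<sigma> t = e'" by (metis rangeE)
  have "t \<noteq> 0" using t e' assms(3) by metis
  then show ?thesis using t e' by (intro exI[of _ t]) simp
qed

lemma inf_entry:
  assumes "e \<in> E0" "upath V E \<sigma>" "\<sigma> 0 = e"
  shows "\<exists>t\<ge>N. \<sigma> t \<in> E0"
proof (induction N)
  case 0 then show ?case using assms by blast
next
  case (Suc N)
  then obtain t where t: "t \<ge> N" "\<sigma> t \<in> E0" by blast
  define \<sigma>' where "\<sigma>' = (\<lambda>i. \<sigma> (i + t))"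
  have u: "upath V E \<sigma>'" unfolding \<sigma>'_def using upath_shift[OF assms(2)] .
  have u0: "\<sigma>' 0 = \<sigma> t" unfolding \<sigma>'_def by simp
  obtain t' where "t' > 0" "\<sigma>' t' \<in> E0" using ret[OF t(2) u u0] by blast
  then show ?case using t unfolding \<sigma>'_def by (intro exI[of _ "t' + t"]) auto
qed

lemma inf_p:
  assumes "upath V E g" "g 0 = p"
  shows "\<exists>t\<ge>N. g t \<in> E0"
proof -
  have "E `` {g 0} \<noteq> {}" using assms(2) sp by simp
  then have "(g 0, g (Suc 0)) \<in> E" by (rule upath_edge[OF assms(1)])
  then have "g 1 \<in> E `` {p}" using assms(2) by simp
  then have s: "g 1 \<in> {s1, s2}" using sp by simp
  define h where "h = (\<lambda>i. g (i + 1))"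
  have u: "upath V E h" unfolding h_def using upath_shift[OF assms(1)] .
  have u0: "h 0 = g 1" unfolding h_def by simp
  obtain t where t: "h t \<in> Vsucc V E p (g 1)" using entry[OF s u u0] by blast
  have ht: "h t \<in> E0" using t s by auto
  define h' where "h' = (\<lambda>i. h (i + t))"
  have u': "upath V E h'" unfolding h'_def using upath_shift[OF u] .
  have u0': "h' 0 = h t" unfolding h'_def by simp
  obtain t' where "t' \<ge> N" "h' t' \<in> E0" using inf_entry[OF ht u' u0'] by blast
  then show ?thesis unfolding h'_def h_def by (intro exI[of _ "t' + t + 1"]) auto
qed

lemma path_to:
  assumes "x \<in> W"
  shows "\<exists>\<rho>. fpath V E \<rho> \<and> hd \<rho> = p \<and> last \<rho> = x"
proof -
  obtain f where f: "upath V E f" "f 0 = p" using upath_exists[OF EV pV] by blast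
  have "x \<in> range f" using Wcov[OF assms f] .
  then have ex: "\<exists>t. f t = x" by auto
  define t where "t = (LEAST t. f t = x)"
  have t1: "f t = x" unfolding t_def using ex by (rule LeastI_ex)
  have t2: "f j \<noteq> f t" if j: "j < t" for j
  proof -
    have "\<not> f j = x" using not_less_Least[of j "\<lambda>t. f t = x"] j unfolding t_def by blast
    then show ?thesis using t1 by simp
  qed
  have fp: "fpath V E (map f [0..<Suc t])" using upath_prefix_least[OF f(1) t2] .
  have "hd (map f [0..<Suc t]) = p" using map_upt_props(1)[of f t] f(2) by simp
  moreover have "last (map f [0..<Suc t]) = x" using map_upt_props(2)[of f t] t1 by simp
  ultimately show ?thesis using fp by (intro exI[of _ "map f [0..<Suc t]"]) simp
qed

lemma cov:
  assumes "x \<in> C" "upath V E \<sigma>" "\<sigma> 0 = x"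
  shows "C \<subseteq> range \<sigma>"
proof -
  obtain \<rho> where r: "fpath V E \<rho>" "hd \<rho> = p" "last \<rho> = x" using path_to assms(1) by blast
  let ?N = "length \<rho> - 1"
  have pp: "upath V E (pre \<rho> \<sigma>)" "pre \<rho> \<sigma> 0 = p" "\<And>i. pre \<rho> \<sigma> (i + ?N) = \<sigma> i"
    using pre_props[OF r(1) assms(2)] r assms(3) by auto
  obtain t where t: "t \<ge> ?N" "pre \<rho> \<sigma> t \<in> E0" using inf_p[OF pp(1) pp(2)] by blast
  have "t = (t - ?N) + ?N" using t by simp
  then have "\<sigma> (t - ?N) \<in> E0" using pp(3)[of "t - ?N"] t by metis
  moreover have "upath V E (\<lambda>i. \<sigma> (i + (t - ?N)))" using upath_shift[OF assms(2)] by blast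
  ultimately have "C \<subseteq> range (\<lambda>i. \<sigma> (i + (t - ?N)))" using cov_entry by simp
  then show ?thesis by auto
qed

end

lemma prefix_to:
  assumes "upath V E f" "y \<in> range f"
  shows "\<exists>\<pi>. fpath V E \<pi> \<and> hd \<pi> = f 0 \<and> last \<pi> = y"
proof -
  have ex: "\<exists>t. f t = y" using assms(2) by auto
  define t where "t = (LEAST t. f t = y)"
  have t1: "f t = y" unfolding t_def using ex by (rule LeastI_ex)
  have t2: "f j \<noteq> f t" if j: "j < t" for j
  proof -
    have "\<not> f j = y" using not_less_Least[of j "\<lambda>t. f t = y"] j unfolding t_def by blast
    then show ?thesis using t1 by simp
  qed
  have fp: "fpath V E (map f [0..<Suc t])" using upath_prefix_least[OF assms(1) t2] .
  have "hd (map f [0..<Suc t]) = f 0" using map_upt_props(1)[of f t] by simp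
  moreover have "last (map f [0..<Suc t]) = y" using map_upt_props(2)[of f t] t1 by simp
  ultimately show ?thesis using fp by (intro exI[of _ "map f [0..<Suc t]"]) simp
qed

context S
begin

lemma other_C: "\<exists>c. c \<in> C \<and> c \<noteq> x"
proof -
  obtain e1 e2 where e: "e1 \<in> E0" "e2 \<in> E0" "e1 \<noteq> e2" using two by blast
  then have "e1 \<in> C" "e2 \<in> C" using E0C by auto
  then show ?thesis using e(3) by metis
qed

lemma step:
  assumes x: "x \<in> C" and g: "upath V E g" and g0: "g 0 = x"
  shows "\<exists>t>0. g t \<in> W \<and> (\<forall>j. 0 < j \<and> j < t \<longrightarrow> g j \<notin> W) \<and> (x, g t) \<in> Ap_edges V E p"
proof -
  obtain c where c: "c \<in> C" "c \<noteq> x" using other_C by blast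
  have "c \<in> range g" using cov[OF x g g0] c(1) by blast
  then obtain tc where tc: "g tc = c" by auto
  have "tc \<noteq> 0"
  proof
    assume "tc = 0"
    then have "c = x" using tc g0 by simp
    then show False using c(2) by simp
  qed
  then have "0 < tc" by simp
  then have ex: "\<exists>t. 0 < t \<and> g t \<in> W" using tc c by blast
  define t where "t = (LEAST t. 0 < t \<and> g t \<in> W)"
  have t1: "0 < t \<and> g t \<in> W" unfolding t_def using ex by (rule LeastI_ex)
  have t2: "g j \<notin> W" if "0 < j" "j < t" for j
    using not_less_Least[of j "\<lambda>t. 0 < t \<and> g t \<in> W"] that unfolding t_def by blast
  have nosink: "E `` {g j} \<noteq> {}" if j: "j < t" for j
  proof
    assume sink: "E `` {g j} = {}"
    show False
    proof (cases "j = 0")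
      case True
      have "g tc = g j" using upath_sink[OF g sink, of tc] True by simp
      then show False using tc c g0 True by simp
    next
      case False
      have "g t = g j" using upath_sink[OF g sink, of t] j by simp
      then show False using t1 t2[of j] False j by simp
    qed
  qed
  define I where "I = map g [0..<Suc t]"
  have fp: "fpath V E I" unfolding I_def using upath_prefix_fpath[OF g nosink] by blast
  have "interval V E W x (g t)" unfolding interval_def
  proof (intro exI[of _ I] conjI)
    show "fpath V E I" by (rule fp)
    show "2 \<le> length I" unfolding I_def using t1 by simp
    show "hd I = x" unfolding I_def using map_upt_props(1)[of g t] g0 by simp
    show "last I = g t" unfolding I_def using map_upt_props(2)[of g t] by simp
    show "x \<in> W" using x by simp
    show "g t \<in> W" using t1 by simp
    show "\<forall>i. 0 < i \<and> i < length I - 1 \<longrightarrow> I ! i \<notin> W"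
    proof (intro allI impI)
      fix i assume i: "0 < i \<and> i < length I - 1"
      then have "i < t" unfolding I_def by simp
      then have "I ! i = g i" unfolding I_def using map_upt_props(3)[of i t g] by simp
      then show "I ! i \<notin> W" using t2 i \<open>i < t\<close> by simp
    qed
  qed
  then have "(x, g t) \<in> Ap_edges V E p" unfolding Ap_edges_def using x t1 by simp
  then show ?thesis using t1 t2 by blast
qed

lemma interval_path:
  assumes "interval V E W x y"
  shows "\<exists>I. fpath V E I \<and> length I \<ge> 2 \<and> hd I = x \<and> last I = y \<and> set I \<subseteq> {x, y} \<union> (V - W)"
proof -
  obtain I where I: "fpath V E I" "length I \<ge> 2" "hd I = x" "last I = y"
    "\<forall>i. 0 < i \<and> i < length I - 1 \<longrightarrow> I ! i \<notin> W"
    using assms unfolding interval_def by blast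
  have ne: "I \<noteq> []" using I by auto
  have "set I \<subseteq> {x, y} \<union> (V - W)"
  proof
    fix z assume "z \<in> set I"
    then obtain i where i: "i < length I" "I ! i = z" by (auto simp: in_set_conv_nth)
    have zV: "z \<in> V" using fpath_nth_V[OF I(1) i(1)] i(2) by simp
    show "z \<in> {x, y} \<union> (V - W)"
    proof (cases "i = 0")
      case True then have "z = x" using i I(3) ne by (simp add: hd_conv_nth)
      then show ?thesis by simp
    next
      case False
      show ?thesis
      proof (cases "i = length I - 1")
        case True then have "z = y" using i I(4) ne by (simp add: last_conv_nth)
        then show ?thesis by simp
      next
        case F2: False
        then have "z \<notin> W" using I(5) False i by auto
        then show ?thesis using zV by simp
      qed
    qed
  qed
  then show ?thesis using I by blast
qed

lemma noret:
  assumes x: "x \<in> C"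
  shows "(x, p) \<notin> Ap_edges V E p"
proof
  assume "(x, p) \<in> Ap_edges V E p"
  then have "interval V E W x p" unfolding Ap_edges_def by simp
  then obtain I where I: "fpath V E I" "length I \<ge> 2" "hd I = x" "last I = p" "set I \<subseteq> {x, p} \<union> (V - W)"
    using interval_path by blast
  obtain e1 e2 where e: "e1 \<in> E0" "e2 \<in> E0" "e1 \<noteq> e2" using two by blast
  have eC: "e1 \<in> C" "e2 \<in> C" using e E0C by auto
  obtain s where s: "s \<in> {s1, s2}" "e1 \<in> Vsucc V E p s" using e(1) by blast
  obtain a1 where a1: "fpath V E a1" "length a1 \<ge> 2" "hd a1 = p" "last a1 = e1" "set a1 \<subseteq> {p, e1} \<union> (V - W)"
    using entry_path[OF s] by blast
  obtain s' where s': "s' \<in> {s1, s2}" "e2 \<in> Vsucc V E p s'" using e(2) by blast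
  obtain a2 where a2: "fpath V E a2" "length a2 \<ge> 2" "hd a2 = p" "last a2 = e2" "set a2 \<subseteq> {p, e2} \<union> (V - W)"
    using entry_path[OF s'] by blast
  have e1V: "e1 \<in> V" using eC WV by blast
  obtain \<sigma> where \<sigma>: "upath V E \<sigma>" "\<sigma> 0 = e1" using upath_exists[OF EV e1V] by blast
  have "x \<in> range \<sigma>" using cov_entry[OF e(1) \<sigma>] x by blast
  then obtain \<pi> where \<pi>: "fpath V E \<pi>" "hd \<pi> = e1" "last \<pi> = x" using prefix_to[OF \<sigma>(1)] \<sigma>(2) by metis
  have "\<exists>c. fpath V E c \<and> length c \<ge> 2 \<and> hd c = p \<and> last c = p \<and> (e1 \<notin> set c \<or> e2 \<notin> set c)"
  proof (rule GL[OF a1(1) a2(1) \<pi>(1) I(1) a1(3) a2(3) a1(4) a2(4) \<pi>(2) \<pi>(3) I(3) I(4) a1(2) a2(2)])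
    show "set a1 \<subseteq> {p, e1} \<union> (V - W)" by (rule a1(5))
    show "set a2 \<subseteq> {p, e2} \<union> (V - W)" by (rule a2(5))
    show "set I \<subseteq> {x, p} \<union> (V - W)" by (rule I(5))
    show "e1 \<notin> V - W" using eC by simp
    show "e2 \<notin> V - W" using eC by simp
    show "e1 \<noteq> e2" by (rule e(3))
    show "p \<in> {e1, e2} \<Longrightarrow> p = x" using eC by auto
  qed
  then obtain c where c: "fpath V E c" "length c \<ge> 2" "hd c = p" "last c = p" "e1 \<notin> set c \<or> e2 \<notin> set c"
    by blast
  have cy: "upath V E (cyc c)" "cyc c 0 = p" "range (cyc c) = set c"
    using cyc_props[OF c(1) c(2)] c(3,4) by auto
  have "e1 \<in> range (cyc c)" using Wcov[OF _ cy(1) cy(2)] eC by simp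
  moreover have "e2 \<in> range (cyc c)" using Wcov[OF _ cy(1) cy(2)] eC by simp
  ultimately show False using c(5) cy(3) by simp
qed

lemma det:
  assumes x: "x \<in> C" and y1: "(x, y1) \<in> Ap_edges V E p" and y2: "(x, y2) \<in> Ap_edges V E p"
  shows "y1 = y2"
proof (rule ccontr)
  assume ne: "y1 \<noteq> y2"
  have i1: "interval V E W x y1" and y1W: "y1 \<in> W" using y1 unfolding Ap_edges_def by auto
  have i2: "interval V E W x y2" and y2W: "y2 \<in> W" using y2 unfolding Ap_edges_def by auto
  have "y1 \<noteq> p" using noret[OF x] y1 by auto
  then have y1C: "y1 \<in> C" using y1W by simp
  have "y2 \<noteq> p" using noret[OF x] y2 by auto
  then have y2C: "y2 \<in> C" using y2W by simp
  obtain I1 where I1: "fpath V E I1" "length I1 \<ge> 2" "hd I1 = x" "last I1 = y1" "set I1 \<subseteq> {x, y1} \<union> (V - W)"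
    using interval_path[OF i1] by blast
  obtain I2 where I2: "fpath V E I2" "length I2 \<ge> 2" "hd I2 = x" "last I2 = y2" "set I2 \<subseteq> {x, y2} \<union> (V - W)"
    using interval_path[OF i2] by blast
  have y1V: "y1 \<in> V" using y1W WV by blast
  obtain \<sigma> where \<sigma>: "upath V E \<sigma>" "\<sigma> 0 = y1" using upath_exists[OF EV y1V] by blast
  have "x \<in> range \<sigma>" using cov[OF y1C \<sigma>] x by blast
  then obtain \<pi> where \<pi>: "fpath V E \<pi>" "hd \<pi> = y1" "last \<pi> = x" using prefix_to[OF \<sigma>(1)] \<sigma>(2) by metis
  have xV: "x \<in> V" using x WV by blast
  have b: "fpath V E [x]" "hd [x] = x" "last [x] = x" using xV unfolding fpath_def by auto
  have "\<exists>c. fpath V E c \<and> length c \<ge> 2 \<and> hd c = x \<and> last c = x \<and> (y1 \<notin> set c \<or> y2 \<notin> set c)"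
  proof (rule GL[OF I1(1) I2(1) \<pi>(1) b(1) I1(3) I2(3) I1(4) I2(4) \<pi>(2) \<pi>(3) b(2) b(3) I1(2) I2(2)])
    show "set I1 \<subseteq> {x, y1} \<union> (V - W)" by (rule I1(5))
    show "set I2 \<subseteq> {x, y2} \<union> (V - W)" by (rule I2(5))
    show "set [x] \<subseteq> {x, x} \<union> (V - W)" by simp
    show "y1 \<notin> V - W" using y1C by simp
    show "y2 \<notin> V - W" using y2C by simp
    show "y1 \<noteq> y2" by (rule ne)
    show "x \<in> {y1, y2} \<Longrightarrow> x = x" by simp
  qed
  then obtain c where c: "fpath V E c" "length c \<ge> 2" "hd c = x" "last c = x" "y1 \<notin> set c \<or> y2 \<notin> set c"
    by blast
  have cy: "upath V E (cyc c)" "cyc c 0 = x" "range (cyc c) = set c"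
    using cyc_props[OF c(1) c(2)] c(3,4) by auto
  have "C \<subseteq> set c" using cov[OF x cy(1) cy(2)] cy(3) by simp
  then show False using c(5) y1C y2C by blast
qed

definition nxt :: "'a \<Rightarrow> 'a" where
  "nxt x = (THE y. (x, y) \<in> Ap_edges V E p)"

lemma nxt_props:
  assumes x: "x \<in> C"
  shows "(x, nxt x) \<in> Ap_edges V E p" "nxt x \<in> C"
proof -
  have xV: "x \<in> V" using x WV by blast
  obtain g where g: "upath V E g" "g 0 = x" using upath_exists[OF EV xV] by blast
  obtain t where "(x, g t) \<in> Ap_edges V E p" using step[OF x g] by blast
  then have ex: "\<exists>y. (x, y) \<in> Ap_edges V E p" by blast
  have "\<exists>!y. (x, y) \<in> Ap_edges V E p" using ex det[OF x] by blast
  then show xn: "(x, nxt x) \<in> Ap_edges V E p" unfolding nxt_def by (rule theI')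
  then have "nxt x \<in> W" unfolding Ap_edges_def by simp
  moreover have "nxt x \<noteq> p" using noret[OF x] xn by auto
  ultimately show "nxt x \<in> C" by simp
qed

lemma nxt_uniq: "x \<in> C \<Longrightarrow> (x, y) \<in> Ap_edges V E p \<Longrightarrow> y = nxt x"
  using det nxt_props(1) by blast

lemma step2:
  assumes x: "x \<in> C" and g: "upath V E g" and g0: "g 0 = x"
  shows "\<exists>t>0. g t = nxt x \<and> (\<forall>j. 0 < j \<and> j < t \<longrightarrow> g j \<notin> W)"
proof -
  obtain t where t: "t > 0" "\<forall>j. 0 < j \<and> j < t \<longrightarrow> g j \<notin> W" "(x, g t) \<in> Ap_edges V E p"
    using step[OF x g g0] by blast
  have "g t = nxt x" using nxt_uniq[OF x t(3)] .
  then show ?thesis using t by blast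
qed

lemma nxt_pow_C: "x \<in> C \<Longrightarrow> (nxt ^^ k) x \<in> C"
proof (induction k)
  case 0 then show ?case by simp
next
  case (Suc k) then show ?case using nxt_props(2)[of "(nxt ^^ k) x"] by simp
qed

lemma trace:
  assumes x: "x \<in> C" and f: "upath V E f" and f0: "f 0 = x"
  shows "\<exists>i. k \<le> i \<and> f i = (nxt ^^ k) x \<and> (\<forall>j<i. f j \<in> W \<longrightarrow> (\<exists>m<k. f j = (nxt ^^ m) x)) \<and>
     (\<forall>m<k. \<exists>j<i. f j = (nxt ^^ m) x)"
proof (induction k)
  case 0
  show ?case using f0 by (intro exI[of _ 0]) simp
next
  case (Suc k)
  then obtain i where i: "k \<le> i" "f i = (nxt ^^ k) x" "\<forall>j<i. f j \<in> W \<longrightarrow> (\<exists>m<k. f j = (nxt ^^ m) x)"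
    "\<forall>m<k. \<exists>j<i. f j = (nxt ^^ m) x" by blast
  have yC: "(nxt ^^ k) x \<in> C" using nxt_pow_C[OF x] .
  define h where "h = (\<lambda>j. f (j + i))"
  have h: "upath V E h" unfolding h_def using upath_shift[OF f] .
  have h0: "h 0 = (nxt ^^ k) x" unfolding h_def using i(2) by simp
  obtain t where t: "t > 0" "h t = nxt ((nxt ^^ k) x)" "\<forall>j. 0 < j \<and> j < t \<longrightarrow> h j \<notin> W"
    using step2[OF yC h h0] by blast
  show ?case
  proof (rule exI[of _ "i + t"], intro conjI allI impI)
    show "Suc k \<le> i + t" using i(1) t(1) by simp
    show "f (i + t) = (nxt ^^ Suc k) x" using t(2) unfolding h_def by (simp add: add.commute)
  next
    fix j assume j: "j < i + t" "f j \<in> W"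
    show "\<exists>m<Suc k. f j = (nxt ^^ m) x"
    proof (cases "j < i")
      case True then show ?thesis using i(3) j(2) using less_SucI by blast
    next
      case False
      show ?thesis
      proof (cases "j = i")
        case True then show ?thesis using i(2) by (intro exI[of _ k]) simp
      next
        case F2: False
        then have "0 < j - i" "j - i < t" using False j(1) by auto
        then have "h (j - i) \<notin> W" using t(3) by blast
        moreover have "h (j - i) = f j" unfolding h_def using False by simp
        ultimately show ?thesis using j(2) by simp
      qed
    qed
  next
    fix m assume m: "m < Suc k"
    show "\<exists>j<i + t. f j = (nxt ^^ m) x"
    proof (cases "m < k")
      case True
      then obtain j where "j < i" "f j = (nxt ^^ m) x" using i(4) by blast
      then show ?thesis by (intro exI[of _ j]) simp
    next
      case False then have "m = k" using m by simp
      then show ?thesis using i(2) t(1) by (intro exI[of _ i]) simp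
    qed
  qed
qed

lemma orbit:
  assumes x: "x \<in> C" and y: "y \<in> C"
  shows "\<exists>k. (nxt ^^ k) x = y"
proof -
  have xV: "x \<in> V" using x WV by blast
  obtain f where f: "upath V E f" "f 0 = x" using upath_exists[OF EV xV] by blast
  have "y \<in> range f" using cov[OF x f] y by blast
  then obtain i where fi: "f i = y" by auto
  obtain i' where i': "Suc i \<le> i'" "\<forall>j<i'. f j \<in> W \<longrightarrow> (\<exists>m<Suc i. f j = (nxt ^^ m) x)"
    using trace[OF x f, of "Suc i"] by blast
  have "i < i'" using i'(1) by simp
  moreover have "f i \<in> W" using fi y by simp
  ultimately have "\<exists>m<Suc i. f i = (nxt ^^ m) x" using i'(2) by blast
  then obtain m where "f i = (nxt ^^ m) x" by blast
  then have "(nxt ^^ m) x = y" using fi by simp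
  then show ?thesis by (rule exI)
qed

end

context S
begin

lemma finC: "finite C"
proof -
  have "finite V" using cfgA unfolding cfg_def by simp
  then have "finite W" using finite_subset[OF WV] by blast
  then show ?thesis by simp
qed

lemma nxt_surj: "nxt ` C = C"
proof
  show "nxt ` C \<subseteq> C"
  proof
    fix z assume "z \<in> nxt ` C"
    then obtain x where "x \<in> C" "z = nxt x" by blast
    then show "z \<in> C" using nxt_props(2) by simp
  qed
  show "C \<subseteq> nxt ` C"
  proof
    fix y assume y: "y \<in> C"
    have "nxt y \<in> C" using nxt_props(2)[OF y] .
    then obtain k where k: "(nxt ^^ k) (nxt y) = y" using orbit y by blast
    have "nxt ((nxt ^^ k) y) = (nxt ^^ k) (nxt y)" by (rule funpow_swap1)
    then have "nxt ((nxt ^^ k) y) = y" using k by simp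
    moreover have "(nxt ^^ k) y \<in> C" using nxt_pow_C[OF y] .
    ultimately show "y \<in> nxt ` C" using imageI[of "(nxt ^^ k) y" C nxt] by simp
  qed
qed

lemma nxt_inj: "inj_on nxt C"
proof -
  have "card (nxt ` C) = card C" using nxt_surj by simp
  then show ?thesis using eq_card_imp_inj_on[OF finC] by blast
qed

lemma pow_inj: "x \<in> C \<Longrightarrow> y \<in> C \<Longrightarrow> (nxt ^^ k) x = (nxt ^^ k) y \<Longrightarrow> x = y"
proof (induction k)
  case 0 then show ?case by simp
next
  case (Suc k)
  have "nxt ((nxt ^^ k) x) = nxt ((nxt ^^ k) y)" using Suc.prems(3) by simp
  then have "(nxt ^^ k) x = (nxt ^^ k) y"
    using inj_onD[OF nxt_inj _ nxt_pow_C[OF Suc.prems(1)] nxt_pow_C[OF Suc.prems(2)]] by simp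
  then show ?case using Suc.IH Suc.prems(1,2) by simp
qed

definition per :: "'a \<Rightarrow> nat" where
  "per x = (LEAST m. 0 < m \<and> (nxt ^^ m) x = x)"

lemma per_props:
  assumes x: "x \<in> C"
  shows "0 < per x" "(nxt ^^ per x) x = x" "\<And>i j. i < j \<Longrightarrow> j < per x \<Longrightarrow> (nxt ^^ i) x \<noteq> (nxt ^^ j) x"
    "per x = card C"
proof -
  have "nxt x \<in> C" using nxt_props(2)[OF x] .
  then obtain k where k: "(nxt ^^ k) (nxt x) = x" using orbit x by blast
  have "(nxt ^^ Suc k) x = (nxt ^^ k) (nxt x)" using funpow_swap1[of nxt k x] by simp
  then have "(nxt ^^ Suc k) x = x" using k by simp
  then have ex: "\<exists>m. 0 < m \<and> (nxt ^^ m) x = x" by blast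
  have P: "0 < per x \<and> (nxt ^^ per x) x = x" unfolding per_def using ex by (rule LeastI_ex)
  then show "0 < per x" "(nxt ^^ per x) x = x" by auto
  have L: "\<not> (0 < m \<and> (nxt ^^ m) x = x)" if "m < per x" for m
    using not_less_Least[of m "\<lambda>m. 0 < m \<and> (nxt ^^ m) x = x"] that unfolding per_def by blast
  show D: "\<And>i j. i < j \<Longrightarrow> j < per x \<Longrightarrow> (nxt ^^ i) x \<noteq> (nxt ^^ j) x"
  proof
    fix i j assume ij: "i < j" "j < per x" "(nxt ^^ i) x = (nxt ^^ j) x"
    have "j = i + (j - i)" using ij by simp
    moreover have "(nxt ^^ (i + (j - i))) x = (nxt ^^ i) ((nxt ^^ (j - i)) x)" by (simp add: funpow_add)
    ultimately have "(nxt ^^ j) x = (nxt ^^ i) ((nxt ^^ (j - i)) x)" by simp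
    then have "(nxt ^^ i) x = (nxt ^^ i) ((nxt ^^ (j - i)) x)" using ij(3) by simp
    then have "x = (nxt ^^ (j - i)) x" using pow_inj[OF x nxt_pow_C[OF x]] by blast
    moreover have "j - i < per x" "0 < j - i" using ij by auto
    ultimately show False using L[of "j - i"] by simp
  qed
  have cover: "C = (\<lambda>i. (nxt ^^ i) x) ` {..<per x}"
  proof
    show "(\<lambda>i. (nxt ^^ i) x) ` {..<per x} \<subseteq> C"
    proof
      fix z assume "z \<in> (\<lambda>i. (nxt ^^ i) x) ` {..<per x}"
      then obtain i where "z = (nxt ^^ i) x" by (rule imageE)
      then show "z \<in> C" using nxt_pow_C[OF x] by simp
    qed
    show "C \<subseteq> (\<lambda>i. (nxt ^^ i) x) ` {..<per x}"
    proof
      fix y assume y: "y \<in> C"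
      then obtain k where k: "(nxt ^^ k) x = y" using orbit x by blast
      have "(nxt ^^ (k mod per x)) x = y" using funpow_mod_eq[where f=nxt and n="per x" and x=x and m=k] P k by simp
      moreover have "k mod per x < per x" using P by simp
      ultimately show "y \<in> (\<lambda>i. (nxt ^^ i) x) ` {..<per x}"
        by (intro image_eqI[where x="k mod per x"]) simp_all
    qed
  qed
  have "inj_on (\<lambda>i. (nxt ^^ i) x) {..<per x}"
  proof (rule inj_onI)
    fix i j assume ij: "i \<in> {..<per x}" "j \<in> {..<per x}" "(nxt ^^ i) x = (nxt ^^ j) x"
    show "i = j"
    proof (rule ccontr)
      assume "i \<noteq> j"
      then have "i < j \<or> j < i" by auto
      then show False using D[of i j] D[of j i] ij by auto
    qed
  qed
  then have "card ((\<lambda>i. (nxt ^^ i) x) ` {..<per x}) = per x" by (simp add: card_image)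
  then show "per x = card C" using cover by simp
qed

definition olist :: "'a list \<Rightarrow> bool" where
  "olist w \<longleftrightarrow> length w = card C \<and> distinct w \<and> set w = C \<and>
     (\<forall>j < card C. w ! j = (nxt ^^ j) (w ! 0)) \<and> (nxt ^^ card C) (w ! 0) = w ! 0"

definition orb :: "'a \<Rightarrow> 'a list" where
  "orb x = map (\<lambda>i. (nxt ^^ i) x) [0..<card C]"

lemma cardC: "card C \<ge> 2"
proof -
  obtain e1 e2 where e: "e1 \<in> E0" "e2 \<in> E0" "e1 \<noteq> e2" using two by blast
  then have "{e1, e2} \<subseteq> C" using E0C by auto
  then have "card {e1, e2} \<le> card C" using finC by (rule card_mono[rotated])
  then show ?thesis using e(3) by simp
qed

lemma orb_olist:
  assumes x: "x \<in> C"
  shows "olist (orb x)" "orb x ! 0 = x"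
proof -
  have n: "0 < card C" using cardC by simp
  show o0: "orb x ! 0 = x" unfolding orb_def using n by simp
  have nth: "orb x ! j = (nxt ^^ j) x" if "j < card C" for j unfolding orb_def using that by simp
  have len: "length (orb x) = card C" unfolding orb_def by simp
  have dist: "distinct (orb x)"
  proof -
    have "inj_on (\<lambda>i. (nxt ^^ i) x) {0..<card C}"
    proof (rule inj_onI)
      fix i j assume ij: "i \<in> {0..<card C}" "j \<in> {0..<card C}" "(nxt ^^ i) x = (nxt ^^ j) x"
      show "i = j"
      proof (rule ccontr)
        assume "i \<noteq> j"
        then have "i < j \<or> j < i" by auto
        then show False using per_props(3)[OF x, of i j] per_props(3)[OF x, of j i] per_props(4)[OF x] ij by auto
      qed
    qed
    then show ?thesis unfolding orb_def by (simp add: distinct_map)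
  qed
  have "set (orb x) = C"
  proof -
    have "card (set (orb x)) = card C" using dist len by (simp add: distinct_card)
    moreover have "set (orb x) \<subseteq> C" unfolding orb_def using nxt_pow_C[OF x] by auto
    ultimately show ?thesis using finC by (simp add: card_subset_eq)
  qed
  moreover have "(nxt ^^ card C) x = x" using per_props(2,4)[OF x] by simp
  ultimately show "olist (orb x)" unfolding olist_def using len dist nth o0 by simp
qed

lemma olist_unf:
  assumes "olist w"
  shows "is_unfolding V E p w"
proof -
  have w: "length w = card C" "distinct w" "set w = C" "\<And>j. j < card C \<Longrightarrow> w ! j = (nxt ^^ j) (w ! 0)"
    using assms unfolding olist_def by blast+
  have "w \<noteq> []" using w(1) cardC by auto
  moreover have "\<forall>i. Suc i < length w \<longrightarrow> (w ! i, w ! Suc i) \<in> Ap_edges V E p"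
  proof (intro allI impI)
    fix i assume i: "Suc i < length w"
    have "i < length w" using i by simp
    then have "w ! i \<in> set w" by simp
    then have "w ! i \<in> C" using w(3) by simp
    moreover have "w ! Suc i = nxt (w ! i)"
    proof -
      have "w ! Suc i = (nxt ^^ Suc i) (w ! 0)" using w(1) w(4)[of "Suc i"] i by simp
      moreover have "w ! i = (nxt ^^ i) (w ! 0)" using w(1) w(4)[of i] i by simp
      ultimately show ?thesis by simp
    qed
    ultimately show "(w ! i, w ! Suc i) \<in> Ap_edges V E p" using nxt_props(1) by simp
  qed
  ultimately show ?thesis unfolding is_unfolding_def using w(2,3) by simp
qed

lemma unf_olist:
  assumes "is_unfolding V E p w"
  shows "olist w"
proof -
  have w: "w \<noteq> []" "distinct w" "set w = C" "\<And>i. Suc i < length w \<Longrightarrow> (w ! i, w ! Suc i) \<in> Ap_edges V E p"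
    using assms unfolding is_unfolding_def by auto
  have len: "length w = card C" using w(2,3) distinct_card by fastforce
  have inC: "\<And>i. i < length w \<Longrightarrow> w ! i \<in> C" using w(3) nth_mem by blast
  have nx: "\<And>i. Suc i < length w \<Longrightarrow> w ! Suc i = nxt (w ! i)"
    using w(4) inC nxt_uniq by (meson Suc_lessD)
  have pw: "\<And>j. j < length w \<Longrightarrow> w ! j = (nxt ^^ j) (w ! 0)"
  proof -
    fix j show "j < length w \<Longrightarrow> w ! j = (nxt ^^ j) (w ! 0)"
    proof (induction j)
      case 0 then show ?case by simp
    next
      case (Suc j) then show ?case using nx by simp
    qed
  qed
  define l where "l = length w - 1"
  have l: "l < length w" "Suc l = length w" using w(1) unfolding l_def by auto
  have "nxt (w ! l) \<in> C" using nxt_props(2)[OF inC[OF l(1)]] .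
  then obtain i where i: "i < length w" "w ! i = nxt (w ! l)" using w(3) by (metis in_set_conv_nth)
  have "i = 0"
  proof (rule ccontr)
    assume "i \<noteq> 0"
    then obtain i' where i': "i = Suc i'" by (cases i) auto
    then have "w ! i = nxt (w ! i')" using nx i by simp
    then have "nxt (w ! i') = nxt (w ! l)" using i by simp
    moreover have "w ! i' \<in> C" "w ! l \<in> C" using inC i i' l by auto
    ultimately have "w ! i' = w ! l" using nxt_inj unfolding inj_on_def by blast
    moreover have "i' \<noteq> l" using i i' l by simp
    ultimately show False using w(2) i i' l nth_eq_iff_index_eq by (metis Suc_lessD)
  qed
  have "(nxt ^^ length w) (w ! 0) = nxt ((nxt ^^ l) (w ! 0))" using l(2) by (metis funpow.simps(2) comp_apply)
  also have "\<dots> = nxt (w ! l)" using pw[OF l(1)] by simp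
  also have "\<dots> = w ! 0" using i \<open>i = 0\<close> by simp
  finally have perw: "(nxt ^^ length w) (w ! 0) = w ! 0" .
  show ?thesis unfolding olist_def
  proof (intro conjI allI impI)
    show "length w = card C" by (rule len)
    show "distinct w" by (rule w(2))
    show "set w = C" by (rule w(3))
    fix j assume "j < card C"
    then show "w ! j = (nxt ^^ j) (w ! 0)" using pw[of j] len by simp
  next
    show "(nxt ^^ card C) (w ! 0) = w ! 0" using perw len by simp
  qed
qed

definition d :: "'a \<Rightarrow> 'a \<Rightarrow> nat" where
  "d x y = (LEAST k. (nxt ^^ k) x = y)"

lemma d_props:
  assumes "x \<in> C" "y \<in> C"
  shows "(nxt ^^ d x y) x = y" "\<And>k. k < d x y \<Longrightarrow> (nxt ^^ k) x \<noteq> y"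
proof -
  have ex: "\<exists>k. (nxt ^^ k) x = y" using orbit assms by blast
  show "(nxt ^^ d x y) x = y" unfolding d_def using ex by (rule LeastI_ex)
  show "\<And>k. k < d x y \<Longrightarrow> (nxt ^^ k) x \<noteq> y" unfolding d_def using not_less_Least by blast
qed

lemma d_eq:
  assumes "x \<in> C" "y \<in> C" "(nxt ^^ k) x = y" "\<And>k'. k' < k \<Longrightarrow> (nxt ^^ k') x \<noteq> y"
  shows "d x y = k"
  unfolding d_def using assms(3,4) by (intro Least_equality) (auto simp: not_less[symmetric])

lemma olist_d:
  assumes w: "olist w" and j: "j < card C" and l: "l < card C"
  shows "d (w ! j) (w ! l) = (if j \<le> l then l - j else card C + l - j)"
proof -
  let ?n = "card C"
  have W: "length w = ?n" "distinct w" "set w = C" "\<And>j. j < ?n \<Longrightarrow> w ! j = (nxt ^^ j) (w ! 0)"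
    "(nxt ^^ ?n) (w ! 0) = w ! 0"
    using w unfolding olist_def by blast+
  have n: "0 < ?n" using j by simp
  have pos: "(nxt ^^ k) (w ! j) = w ! ((k + j) mod ?n)" for k
  proof -
    have "(nxt ^^ k) (w ! j) = (nxt ^^ (k + j)) (w ! 0)" using W(4)[OF j] by (simp add: funpow_add)
    also have "\<dots> = (nxt ^^ ((k + j) mod ?n)) (w ! 0)" using funpow_mod_eq[where f=nxt and n="?n" and x="w ! 0" and m="k + j"] W(5) by simp
    also have "\<dots> = w ! ((k + j) mod ?n)" using W(4)[of "(k + j) mod ?n"] n by simp
    finally show ?thesis .
  qed
  have iff: "(nxt ^^ k) (w ! j) = w ! l \<longleftrightarrow> (k + j) mod ?n = l" for k
  proof -
    have a: "(k + j) mod ?n < length w" using W(1) n by simp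
    have b: "l < length w" using W(1) l by simp
    show ?thesis using nth_eq_iff_index_eq[OF W(2) a b] pos[of k] by simp
  qed
  have "w ! j \<in> set w" "w ! l \<in> set w" using W(1) j l by simp_all
  then have inC: "w ! j \<in> C" "w ! l \<in> C" using W(3) by simp_all
  define k0 where "k0 = (if j \<le> l then l - j else ?n + l - j)"
  have "(k0 + j) mod ?n = l"
  proof (cases "j \<le> l")
    case True then have "k0 + j = l" unfolding k0_def by simp
    then show ?thesis using l by simp
  next
    case False then have "k0 + j = ?n + l" unfolding k0_def using j by simp
    then show ?thesis using l by simp
  qed
  moreover have "(k + j) mod ?n \<noteq> l" if "k < k0" for k
  proof (cases "j \<le> l")
    case True
    then have "k + j < ?n" "k + j < l" using that l unfolding k0_def by auto
    then show ?thesis by simp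
  next
    case False
    then have k: "k + j < ?n + l" using that unfolding k0_def by auto
    show ?thesis
    proof (cases "k + j < ?n")
      case True then show ?thesis using False by simp
    next
      case F2: False
      then have "(k + j) mod ?n = (k + j - ?n) mod ?n" by (simp add: le_mod_geq)
      moreover have "k + j - ?n < ?n" using k l by simp
      ultimately have "(k + j) mod ?n = k + j - ?n" by simp
      then show ?thesis using k F2 by simp
    qed
  qed
  ultimately have "d (w ! j) (w ! l) = k0" using iff by (intro d_eq[OF inC]) auto
  then show ?thesis unfolding k0_def .
qed

end

context S
begin

lemma order_v:
  assumes v: "v \<in> C" and a: "a \<in> C" and b: "b \<in> C" and ab: "a \<noteq> b"
    and f: "upath V E f" and f0: "f 0 = v"
  shows "(\<exists>i. f i = a \<and> (\<forall>j<i. f j \<noteq> b)) \<longleftrightarrow> d v a < d v b"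
proof
  assume "\<exists>i. f i = a \<and> (\<forall>j<i. f j \<noteq> b)"
  then obtain i where i: "f i = a" "\<forall>j<i. f j \<noteq> b" by blast
  show "d v a < d v b"
  proof (rule ccontr)
    assume "\<not> d v a < d v b"
    moreover have "d v a \<noteq> d v b"
    proof
      assume "d v a = d v b"
      have "a = (nxt ^^ d v a) v" using d_props(1)[OF v a] by (rule sym)
      also have "\<dots> = (nxt ^^ d v b) v" using \<open>d v a = d v b\<close> by (rule arg_cong)
      also have "\<dots> = b" using d_props(1)[OF v b] .
      finally have "a = b" .
      then show False using ab by simp
    qed
    ultimately have lt: "d v b < d v a" by simp
    obtain ia where ia: "d v a \<le> ia" "f ia = (nxt ^^ d v a) v"
      "\<forall>j<ia. f j \<in> W \<longrightarrow> (\<exists>m<d v a. f j = (nxt ^^ m) v)"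
      "\<forall>m<d v a. \<exists>j<ia. f j = (nxt ^^ m) v"
      using trace[OF v f f0, of "d v a"] by blast
    have "ia \<le> i"
    proof (rule ccontr)
      assume "\<not> ia \<le> i"
      then have "i < ia" by simp
      moreover have "f i \<in> W" using i(1) a by simp
      ultimately obtain m where m: "m < d v a" "f i = (nxt ^^ m) v" using ia(3) by blast
      have "(nxt ^^ m) v \<noteq> a" using d_props(2)[OF v a m(1)] .
      then show False using m(2) i(1) by simp
    qed
    obtain j where j: "j < ia" "f j = (nxt ^^ d v b) v" using ia(4) lt by blast
    have "f j = b" using j(2) d_props(1)[OF v b] by (rule trans)
    moreover have "j < i" using j \<open>ia \<le> i\<close> by simp
    ultimately show False using i(2) by blast
  qed
next
  assume lt: "d v a < d v b"
  obtain i where i: "d v a \<le> i" "f i = (nxt ^^ d v a) v"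
    "\<forall>j<i. f j \<in> W \<longrightarrow> (\<exists>m<d v a. f j = (nxt ^^ m) v)"
    using trace[OF v f f0, of "d v a"] by blast
  have "f i = a" using i(2) d_props(1)[OF v a] by (rule trans)
  moreover have "\<forall>j<i. f j \<noteq> b"
  proof (intro allI impI)
    fix j assume j: "j < i"
    show "f j \<noteq> b"
    proof
      assume fj: "f j = b"
      then have "f j \<in> W" using b by simp
      then obtain m where m: "m < d v a" "f j = (nxt ^^ m) v" using i(3) j by blast
      then have "m < d v b" using lt by simp
      have "(nxt ^^ m) v \<noteq> b" using d_props(2)[OF v b \<open>m < d v b\<close>] .
      then show False using fj m(2) by simp
    qed
  qed
  ultimately show "\<exists>i. f i = a \<and> (\<forall>j<i. f j \<noteq> b)" by blast
qed

lemma order_s: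
  assumes s: "s \<in> {s1, s2}" and a: "a \<in> C" and b: "b \<in> C" and ab: "a \<noteq> b"
  shows "(\<forall>f. upath V E f \<and> f 0 = s \<longrightarrow> (\<exists>i. f i = a \<and> (\<forall>j<i. f j \<noteq> b))) \<longleftrightarrow>
    (\<forall>v\<in>Vsucc V E p s. d v a < d v b)"
proof
  assume H: "\<forall>f. upath V E f \<and> f 0 = s \<longrightarrow> (\<exists>i. f i = a \<and> (\<forall>j<i. f j \<noteq> b))"
  show "\<forall>v\<in>Vsucc V E p s. d v a < d v b"
  proof
    fix v assume vs: "v \<in> Vsucc V E p s"
    then have vC: "v \<in> C" using E0C s by blast
    obtain xs where xs: "fpath V E xs" "hd xs = s" "last xs = v" "\<forall>i. i < length xs - 1 \<longrightarrow> xs ! i \<notin> W"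
      using vs unfolding Vsucc_def by blast
    have vV: "v \<in> V" using vC WV by blast
    obtain \<sigma> where \<sigma>: "upath V E \<sigma>" "\<sigma> 0 = v" using upath_exists[OF EV vV] by blast
    have pp: "upath V E (pre xs \<sigma>)" "pre xs \<sigma> 0 = hd xs" "\<And>i. pre xs \<sigma> (i + (length xs - 1)) = \<sigma> i"
      using pre_props[OF xs(1) \<sigma>(1)] xs(3) \<sigma>(2) by auto
    obtain i where i: "pre xs \<sigma> i = a" "\<forall>j<i. pre xs \<sigma> j \<noteq> b" using H pp(1,2) xs(2) by blast
    let ?N = "length xs - 1"
    have "\<not> i < ?N"
    proof
      assume "i < ?N"
      then have "pre xs \<sigma> i = xs ! i" unfolding pre_def by simp
      then have "a \<notin> W" using xs(4) \<open>i < ?N\<close> i(1) by simp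
      then show False using a by simp
    qed
    then have iN: "i = (i - ?N) + ?N" by simp
    have "\<sigma> (i - ?N) = a" using pp(3)[of "i - ?N"] iN i(1) by simp
    moreover have "\<forall>j<i - ?N. \<sigma> j \<noteq> b"
    proof (intro allI impI)
      fix j assume "j < i - ?N"
      then have "j + ?N < i" by simp
      then have "pre xs \<sigma> (j + ?N) \<noteq> b" using i(2) by blast
      then show "\<sigma> j \<noteq> b" using pp(3)[of j] by simp
    qed
    ultimately have "\<exists>i. \<sigma> i = a \<and> (\<forall>j<i. \<sigma> j \<noteq> b)" by blast
    then show "d v a < d v b" using order_v[OF vC a b ab \<sigma>] by simp
  qed
next
  assume H: "\<forall>v\<in>Vsucc V E p s. d v a < d v b"
  show "\<forall>f. upath V E f \<and> f 0 = s \<longrightarrow> (\<exists>i. f i = a \<and> (\<forall>j<i. f j \<noteq> b))"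
  proof (intro allI impI)
    fix f assume f: "upath V E f \<and> f 0 = s"
    obtain t where t: "f t \<in> Vsucc V E p s" "\<forall>j<t. f j \<notin> W" using entry[OF s] f by blast
    have vC: "f t \<in> C" using E0C s t(1) by blast
    define \<sigma> where "\<sigma> = (\<lambda>i. f (i + t))"
    have u: "upath V E \<sigma>" unfolding \<sigma>_def using upath_shift f by blast
    have u0: "\<sigma> 0 = f t" unfolding \<sigma>_def by simp
    have "d (f t) a < d (f t) b" using H t(1) by blast
    then obtain i where i: "\<sigma> i = a" "\<forall>j<i. \<sigma> j \<noteq> b" using order_v[OF vC a b ab u u0] by blast
    have "f (i + t) = a" using i(1) unfolding \<sigma>_def by simp
    moreover have "\<forall>j<i + t. f j \<noteq> b"
    proof (intro allI impI)
      fix j assume j: "j < i + t"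
      show "f j \<noteq> b"
      proof (cases "j < t")
        case True then have "f j \<notin> W" using t(2) by blast
        then show ?thesis using b by auto
      next
        case False
        then have "j - t < i" "f j = \<sigma> (j - t)" using j unfolding \<sigma>_def by auto
        then show ?thesis using i(2) by simp
      qed
    qed
    ultimately show "\<exists>i. f i = a \<and> (\<forall>j<i. f j \<noteq> b)" by blast
  qed
qed

lemma onW: "on_all_max_paths V E p a \<longleftrightarrow> a \<in> W"
proof
  assume H: "on_all_max_paths V E p a"
  obtain f where f: "upath V E f" "f 0 = p" using upath_exists[OF EV pV] by blast
  have "a \<in> range f" using H f unfolding on_all_upath by blast
  then obtain i where "a = f i" by auto
  then have "a \<in> V" using upath_V[OF f(1)] by simp
  then show "a \<in> W" using H unfolding Vp_def by simp
next
  assume "a \<in> W" then show "on_all_max_paths V E p a" unfolding Vp_def by simp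
qed

lemma DOD_char:
  "DOD V E p s1 s2 a b \<longleftrightarrow> a \<in> C \<and> b \<in> C \<and> a \<noteq> b \<and>
     (\<forall>v\<in>Vsucc V E p s1. d v a < d v b) \<and> (\<forall>v\<in>Vsucc V E p s2. d v b < d v a)"
proof -
  let ?X1 = "\<forall>xs. maxfpath V E xs \<and> hd xs = s1 \<longrightarrow> (\<exists>i < length xs. xs ! i = a \<and> (\<forall>j < i. xs ! j \<noteq> b))"
  let ?X2 = "\<forall>f. ipath V E f \<and> f 0 = s1 \<longrightarrow> (\<exists>i. f i = a \<and> (\<forall>j < i. f j \<noteq> b))"
  let ?Y1 = "\<forall>xs. maxfpath V E xs \<and> hd xs = s2 \<longrightarrow> (\<exists>i < length xs. xs ! i = b \<and> (\<forall>j < i. xs ! j \<noteq> a))"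
  let ?Y2 = "\<forall>f. ipath V E f \<and> f 0 = s2 \<longrightarrow> (\<exists>i. f i = b \<and> (\<forall>j < i. f j \<noteq> a))"
  let ?U1 = "\<forall>f. upath V E f \<and> f 0 = s1 \<longrightarrow> (\<exists>i. f i = a \<and> (\<forall>j<i. f j \<noteq> b))"
  let ?U2 = "\<forall>f. upath V E f \<and> f 0 = s2 \<longrightarrow> (\<exists>i. f i = b \<and> (\<forall>j<i. f j \<noteq> a))"
  have e1: "(?X1 \<and> ?X2) = ?U1" by (rule order_upath)
  have e2: "(?Y1 \<and> ?Y2) = ?U2" by (rule order_upath)
  have "DOD V E p s1 s2 a b = (distinct [p, a, b] \<and> on_all_max_paths V E p a \<and> on_all_max_paths V E p b \<and>
      (?X1 \<and> ?X2) \<and> (?Y1 \<and> ?Y2))" unfolding DOD_def by (simp only: conj_assoc)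
  also have "\<dots> = (a \<in> C \<and> b \<in> C \<and> a \<noteq> b \<and> ?U1 \<and> ?U2)"
    unfolding e1 e2 onW by auto
  also have "\<dots> = (a \<in> C \<and> b \<in> C \<and> a \<noteq> b \<and>
     (\<forall>v\<in>Vsucc V E p s1. d v a < d v b) \<and> (\<forall>v\<in>Vsucc V E p s2. d v b < d v a))"
  proof
    assume H: "a \<in> C \<and> b \<in> C \<and> a \<noteq> b \<and> ?U1 \<and> ?U2"
    then have "(\<forall>v\<in>Vsucc V E p s1. d v a < d v b)" using order_s[of s1 a b] by simp
    moreover have "(\<forall>v\<in>Vsucc V E p s2. d v b < d v a)" using H order_s[of s2 b a] by auto
    ultimately show "a \<in> C \<and> b \<in> C \<and> a \<noteq> b \<and>
     (\<forall>v\<in>Vsucc V E p s1. d v a < d v b) \<and> (\<forall>v\<in>Vsucc V E p s2. d v b < d v a)" using H by blast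
  next
    assume H: "a \<in> C \<and> b \<in> C \<and> a \<noteq> b \<and>
     (\<forall>v\<in>Vsucc V E p s1. d v a < d v b) \<and> (\<forall>v\<in>Vsucc V E p s2. d v b < d v a)"
    then have "?U1" using order_s[of s1 a b] by simp
    moreover have "?U2" using H order_s[of s2 b a] by auto
    ultimately show "a \<in> C \<and> b \<in> C \<and> a \<noteq> b \<and> ?U1 \<and> ?U2" using H by blast
  qed
  finally show ?thesis .
qed

end

lemma lconc_iff: "x \<in> A \<cdot>\<cdot> B \<longleftrightarrow> (\<exists>xs ys. x = xs @ ys \<and> xs \<in> A \<and> ys \<in> B)"
  unfolding lconc_def by blast

lemma lconcI: "x = xs @ ys \<Longrightarrow> xs \<in> A \<Longrightarrow> ys \<in> B \<Longrightarrow> x \<in> A \<cdot>\<cdot> B"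
  unfolding lconc_def by blast

lemma letters_iff: "xs \<in> letters Sx \<longleftrightarrow> (\<exists>v. xs = [v] \<and> v \<in> Sx)"
  unfolding letters_def by blast

lemma lstar_letters: "lstar (letters U) = {xs. set xs \<subseteq> U}"
proof
  show "lstar (letters U) \<subseteq> {xs. set xs \<subseteq> U}"
  proof
    fix xs assume "xs \<in> lstar (letters U)"
    then show "xs \<in> {xs. set xs \<subseteq> U}"
    proof (induction rule: lstar.induct)
      case lstar_Nil then show ?case by simp
    next
      case (lstar_app xs ys)
      then obtain v where "xs = [v]" "v \<in> U" unfolding letters_iff by blast
      then show ?case using lstar_app by simp
    qed
  qed
  show "{xs. set xs \<subseteq> U} \<subseteq> lstar (letters U)"
  proof
    fix xs assume "xs \<in> {xs. set xs \<subseteq> U}"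
    then have "set xs \<subseteq> U" by simp
    then show "xs \<in> lstar (letters U)"
    proof (induction xs)
      case Nil show ?case by (rule lstar_Nil)
    next
      case (Cons x xs)
      have "[x] \<in> letters U" using Cons.prems unfolding letters_iff by simp
      moreover have "xs \<in> lstar (letters U)" using Cons by simp
      ultimately have "[x] @ xs \<in> lstar (letters U)" by (rule lstar_app)
      then show ?case by simp
    qed
  qed
qed

lemma lstar_blocks: "lstar (letters Sx \<cdot>\<cdot> lstar (letters U)) \<subseteq> {xs. set xs \<subseteq> Sx \<union> U}"
proof
  fix xs assume "xs \<in> lstar (letters Sx \<cdot>\<cdot> lstar (letters U))"
  then show "xs \<in> {xs. set xs \<subseteq> Sx \<union> U}"
  proof (induction rule: lstar.induct)
    case lstar_Nil then show ?case by simp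
  next
    case (lstar_app xs ys)
    then obtain as bs where "xs = as @ bs" "as \<in> letters Sx" "bs \<in> lstar (letters U)"
      unfolding lconc_iff by blast
    moreover then obtain v where "as = [v]" "v \<in> Sx" unfolding letters_iff by blast
    moreover have "set bs \<subseteq> U" using \<open>bs \<in> lstar (letters U)\<close> unfolding lstar_letters by simp
    ultimately show ?case using lstar_app by auto
  qed
qed

lemma UL: "lstar (letters U) \<cdot>\<cdot> lstar (letters Sx \<cdot>\<cdot> lstar (letters U)) = {xs. set xs \<subseteq> Sx \<union> U}"
proof
  show "lstar (letters U) \<cdot>\<cdot> lstar (letters Sx \<cdot>\<cdot> lstar (letters U)) \<subseteq> {xs. set xs \<subseteq> Sx \<union> U}"
  proof
    fix x assume "x \<in> lstar (letters U) \<cdot>\<cdot> lstar (letters Sx \<cdot>\<cdot> lstar (letters U))"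
    then obtain xs ys where "x = xs @ ys" "xs \<in> lstar (letters U)" "ys \<in> lstar (letters Sx \<cdot>\<cdot> lstar (letters U))"
      unfolding lconc_iff by blast
    moreover have "set xs \<subseteq> U" using \<open>xs \<in> lstar (letters U)\<close> unfolding lstar_letters by simp
    moreover have "ys \<in> {xs. set xs \<subseteq> Sx \<union> U}" using lstar_blocks \<open>ys \<in> lstar (letters Sx \<cdot>\<cdot> lstar (letters U))\<close> by blast
    ultimately show "x \<in> {xs. set xs \<subseteq> Sx \<union> U}" by auto
  qed
  show "{xs. set xs \<subseteq> Sx \<union> U} \<subseteq> lstar (letters U) \<cdot>\<cdot> lstar (letters Sx \<cdot>\<cdot> lstar (letters U))"
  proof
    fix x assume "x \<in> {xs. set xs \<subseteq> Sx \<union> U}"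
    then have "set x \<subseteq> Sx \<union> U" by simp
    then show "x \<in> lstar (letters U) \<cdot>\<cdot> lstar (letters Sx \<cdot>\<cdot> lstar (letters U))"
    proof (induction x)
      case Nil
      have "[] = [] @ []" by simp
      then show ?case by (rule lconcI[OF _ lstar_Nil lstar_Nil])
    next
      case (Cons x xs)
      have "set xs \<subseteq> Sx \<union> U" using Cons.prems by simp
      then have "xs \<in> lstar (letters U) \<cdot>\<cdot> lstar (letters Sx \<cdot>\<cdot> lstar (letters U))" by (rule Cons.IH)
      then obtain us l where ul: "xs = us @ l" "us \<in> lstar (letters U)" "l \<in> lstar (letters Sx \<cdot>\<cdot> lstar (letters U))"
        unfolding lconc_iff by blast
      show ?case
      proof (cases "x \<in> U")
        case True
        have "[x] \<in> letters U" using True unfolding letters_iff by simp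
        then have h1: "[x] @ us \<in> lstar (letters U)" using ul(2) by (rule lstar_app)
        have h2: "x # xs = ([x] @ us) @ l" using ul(1) by simp
        show ?thesis by (rule lconcI[OF h2 h1 ul(3)])
      next
        case False
        then have "x \<in> Sx" using Cons.prems by simp
        then have xS: "[x] \<in> letters Sx" unfolding letters_iff by simp
        have h3: "[x] @ us \<in> letters Sx \<cdot>\<cdot> lstar (letters U)" by (rule lconcI[OF refl xS ul(2)])
        have h4: "([x] @ us) @ l \<in> lstar (letters Sx \<cdot>\<cdot> lstar (letters U))" using h3 ul(3) by (rule lstar_app)
        have h5: "x # xs = [] @ (([x] @ us) @ l)" using ul(1) by simp
        show ?thesis by (rule lconcI[OF h5 lstar_Nil h4])
      qed
    qed
  qed
qed

lemma lconc_assoc: "A \<cdot>\<cdot> (B \<cdot>\<cdot> C) = (A \<cdot>\<cdot> B) \<cdot>\<cdot> C"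
proof
  show "A \<cdot>\<cdot> (B \<cdot>\<cdot> C) \<subseteq> (A \<cdot>\<cdot> B) \<cdot>\<cdot> C"
  proof
    fix x assume "x \<in> A \<cdot>\<cdot> (B \<cdot>\<cdot> C)"
    then obtain a r where h: "x = a @ r" "a \<in> A" "r \<in> B \<cdot>\<cdot> C" unfolding lconc_iff by blast
    then obtain b c where h2: "r = b @ c" "b \<in> B" "c \<in> C" unfolding lconc_iff by blast
    have ab: "a @ b \<in> A \<cdot>\<cdot> B" by (rule lconcI[OF refl h(2) h2(2)])
    have e: "x = (a @ b) @ c" using h(1) h2(1) by simp
    show "x \<in> (A \<cdot>\<cdot> B) \<cdot>\<cdot> C" by (rule lconcI[OF e ab h2(3)])
  qed
  show "(A \<cdot>\<cdot> B) \<cdot>\<cdot> C \<subseteq> A \<cdot>\<cdot> (B \<cdot>\<cdot> C)"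
  proof
    fix x assume "x \<in> (A \<cdot>\<cdot> B) \<cdot>\<cdot> C"
    then obtain r c where h: "x = r @ c" "r \<in> A \<cdot>\<cdot> B" "c \<in> C" unfolding lconc_iff by blast
    then obtain a b where h2: "r = a @ b" "a \<in> A" "b \<in> B" unfolding lconc_iff by blast
    have bc: "b @ c \<in> B \<cdot>\<cdot> C" by (rule lconcI[OF refl h2(3) h(3)])
    have e: "x = a @ (b @ c)" using h(1) h2(1) by simp
    show "x \<in> A \<cdot>\<cdot> (B \<cdot>\<cdot> C)" by (rule lconcI[OF e h2(2) bc])
  qed
qed

lemma Lang_char:
  "w \<in> letters V1 \<cdot>\<cdot> lstar (letters U) \<cdot>\<cdot> lstar (letters V2 \<cdot>\<cdot> lstar (letters U))
             \<cdot>\<cdot> letters V2 \<cdot>\<cdot> lstar (letters U) \<cdot>\<cdot> lstar (letters V1 \<cdot>\<cdot> lstar (letters U))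
   \<longleftrightarrow> (\<exists>v zs b ys. w = v # zs @ b # ys \<and> v \<in> V1 \<and> set zs \<subseteq> V2 \<union> U \<and> b \<in> V2 \<and> set ys \<subseteq> V1 \<union> U)"
proof -
  have e1: "lstar (letters U) \<cdot>\<cdot> lstar (letters V1 \<cdot>\<cdot> lstar (letters U)) = {xs. set xs \<subseteq> V1 \<union> U}"
    by (rule UL)
  have e2: "lstar (letters U) \<cdot>\<cdot> (lstar (letters V2 \<cdot>\<cdot> lstar (letters U)) \<cdot>\<cdot> R) = {xs. set xs \<subseteq> V2 \<union> U} \<cdot>\<cdot> R"
    for R unfolding lconc_assoc UL ..
  have "w \<in> letters V1 \<cdot>\<cdot> lstar (letters U) \<cdot>\<cdot> lstar (letters V2 \<cdot>\<cdot> lstar (letters U))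
             \<cdot>\<cdot> letters V2 \<cdot>\<cdot> lstar (letters U) \<cdot>\<cdot> lstar (letters V1 \<cdot>\<cdot> lstar (letters U))
     \<longleftrightarrow> w \<in> letters V1 \<cdot>\<cdot> ({xs. set xs \<subseteq> V2 \<union> U} \<cdot>\<cdot> (letters V2 \<cdot>\<cdot> {xs. set xs \<subseteq> V1 \<union> U}))"
    unfolding e1 e2 ..
  also have "\<dots> \<longleftrightarrow> (\<exists>v zs b ys. w = v # zs @ b # ys \<and> v \<in> V1 \<and> set zs \<subseteq> V2 \<union> U \<and> b \<in> V2 \<and> set ys \<subseteq> V1 \<union> U)"
  proof
    assume "w \<in> letters V1 \<cdot>\<cdot> ({xs. set xs \<subseteq> V2 \<union> U} \<cdot>\<cdot> (letters V2 \<cdot>\<cdot> {xs. set xs \<subseteq> V1 \<union> U}))"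
    then obtain a r where ar: "w = a @ r" "a \<in> letters V1" "r \<in> {xs. set xs \<subseteq> V2 \<union> U} \<cdot>\<cdot> (letters V2 \<cdot>\<cdot> {xs. set xs \<subseteq> V1 \<union> U})"
      unfolding lconc_iff by blast
    obtain v where v: "a = [v]" "v \<in> V1" using ar(2) unfolding letters_iff by blast
    obtain zs r2 where zr: "r = zs @ r2" "set zs \<subseteq> V2 \<union> U" "r2 \<in> letters V2 \<cdot>\<cdot> {xs. set xs \<subseteq> V1 \<union> U}"
      using ar(3) unfolding lconc_iff by blast
    obtain bb ys where bys: "r2 = bb @ ys" "bb \<in> letters V2" "set ys \<subseteq> V1 \<union> U"
      using zr(3) unfolding lconc_iff by blast
    obtain b where b: "bb = [b]" "b \<in> V2" using bys(2) unfolding letters_iff by blast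
    have "w = v # zs @ b # ys" using ar(1) v(1) zr(1) bys(1) b(1) by simp
    then show "\<exists>v zs b ys. w = v # zs @ b # ys \<and> v \<in> V1 \<and> set zs \<subseteq> V2 \<union> U \<and> b \<in> V2 \<and> set ys \<subseteq> V1 \<union> U"
      using v(2) zr(2) b(2) bys(3) by blast
  next
    assume "\<exists>v zs b ys. w = v # zs @ b # ys \<and> v \<in> V1 \<and> set zs \<subseteq> V2 \<union> U \<and> b \<in> V2 \<and> set ys \<subseteq> V1 \<union> U"
    then obtain v zs b ys where H: "w = v # zs @ b # ys" "v \<in> V1" "set zs \<subseteq> V2 \<union> U" "b \<in> V2" "set ys \<subseteq> V1 \<union> U"
      by blast
    have bL: "[b] \<in> letters V2" using H(4) unfolding letters_iff by simp
    have ysL: "ys \<in> {xs. set xs \<subseteq> V1 \<union> U}" using H(5) by simp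
    have r2: "[b] @ ys \<in> letters V2 \<cdot>\<cdot> {xs. set xs \<subseteq> V1 \<union> U}" by (rule lconcI[OF refl bL ysL])
    have zsL: "zs \<in> {xs. set xs \<subseteq> V2 \<union> U}" using H(3) by simp
    have r: "zs @ ([b] @ ys) \<in> {xs. set xs \<subseteq> V2 \<union> U} \<cdot>\<cdot> (letters V2 \<cdot>\<cdot> {xs. set xs \<subseteq> V1 \<union> U})"
      by (rule lconcI[OF refl zsL r2])
    have vL: "[v] \<in> letters V1" using H(2) unfolding letters_iff by simp
    have wE: "w = [v] @ (zs @ ([b] @ ys))" using H(1) by simp
    show "w \<in> letters V1 \<cdot>\<cdot> ({xs. set xs \<subseteq> V2 \<union> U} \<cdot>\<cdot> (letters V2 \<cdot>\<cdot> {xs. set xs \<subseteq> V1 \<union> U}))"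
      by (rule lconcI[OF wE vL r])
  qed
  finally show ?thesis .
qed

lemma split_word:
  assumes "set rest \<subseteq> A \<union> B \<union> U" "\<exists>x\<in>set rest. x \<in> B"
    "\<forall>i j. i < j \<longrightarrow> j < length rest \<longrightarrow> rest ! i \<in> A \<longrightarrow> rest ! j \<notin> B"
  shows "\<exists>zs b ys. rest = zs @ b # ys \<and> set zs \<subseteq> B \<union> U \<and> b \<in> B \<and> set ys \<subseteq> A \<union> U"
  using assms
proof (induction rest rule: rev_induct)
  case Nil then show ?case by simp
next
  case (snoc x r)
  have nth: "\<And>i. i < length r \<Longrightarrow> (r @ [x]) ! i = r ! i" by (simp add: nth_append)
  have nthx: "(r @ [x]) ! length r = x" by simp
  show ?case
  proof (cases "x \<in> B")
    case True
    have "set r \<subseteq> B \<union> U"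
    proof
      fix y assume "y \<in> set r"
      then obtain i where i: "i < length r" "r ! i = y" by (auto simp: in_set_conv_nth)
      have "y \<notin> A"
      proof
        assume "y \<in> A"
        then have "(r @ [x]) ! i \<in> A" using nth i by simp
        moreover have "i < length r" "length r < length (r @ [x])" using i(1) by simp_all
        ultimately have "(r @ [x]) ! length r \<notin> B" using snoc.prems(3) by blast
        then show False using nthx True by simp
      qed
      moreover have "y \<in> A \<union> B \<union> U" using snoc.prems(1) \<open>y \<in> set r\<close> by auto
      ultimately show "y \<in> B \<union> U" by blast
    qed
    then show ?thesis using True by (intro exI[of _ r] exI[of _ x] exI[of _ "[]"]) simp
  next
    case False
    have p1: "set r \<subseteq> A \<union> B \<union> U" using snoc.prems(1) by simp
    have p2: "\<exists>y\<in>set r. y \<in> B" using snoc.prems(2) False by auto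
    have p3: "\<forall>i j. i < j \<longrightarrow> j < length r \<longrightarrow> r ! i \<in> A \<longrightarrow> r ! j \<notin> B"
    proof (intro allI impI)
      fix i j assume ij: "i < j" "j < length r" "r ! i \<in> A"
      then have "(r @ [x]) ! i \<in> A" using nth by simp
      then have "(r @ [x]) ! j \<notin> B" using snoc.prems(3) ij by simp
      then show "r ! j \<notin> B" using nth ij by simp
    qed
    obtain zs b ys where IH: "r = zs @ b # ys" "set zs \<subseteq> B \<union> U" "b \<in> B" "set ys \<subseteq> A \<union> U"
      using snoc.IH[OF p1 p2 p3] by blast
    have "x \<in> A \<union> U" using snoc.prems(1) False by auto
    then show ?thesis using IH by (intro exI[of _ zs] exI[of _ b] exI[of _ "ys @ [x]"]) auto
  qed
qed

lemma pos_cls: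
  assumes w: "w = v # zs @ b # ys" and j: "j < length w"
  shows "(j = 0 \<and> w ! j = v) \<or> (0 < j \<and> j < Suc (length zs) \<and> w ! j \<in> set zs) \<or>
    (j = Suc (length zs) \<and> w ! j = b) \<or> (Suc (length zs) < j \<and> w ! j \<in> set ys)"
proof (cases j)
  case 0 then show ?thesis using w by simp
next
  case (Suc k)
  then have wj: "w ! j = (zs @ b # ys) ! k" using w by simp
  show ?thesis
  proof (cases "k < length zs")
    case True then show ?thesis using wj Suc by (simp add: nth_append)
  next
    case False
    show ?thesis
    proof (cases "k = length zs")
      case True then show ?thesis using wj Suc by (simp add: nth_append)
    next
      case F2: False
      then have k: "k > length zs" using False by simp
      then have "w ! j = ys ! (k - Suc (length zs))" using wj by (simp add: nth_append)
      moreover have "k - Suc (length zs) < length ys" using j w Suc k by simp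
      ultimately have "w ! j \<in> set ys" by simp
      then show ?thesis using Suc k by simp
    qed
  qed
qed

locale S2 = S +
  assumes disj: "Vsucc V E p s1 \<inter> Vsucc V E p s2 = {}"
begin

abbreviation "VV1 \<equiv> Vsucc V E p s1"
abbreviation "VV2 \<equiv> Vsucc V E p s2"
abbreviation "UU \<equiv> Vp V E p - (Vsucc V E p s1 \<union> Vsucc V E p s2)"

lemma Vne: "s \<in> {s1, s2} \<Longrightarrow> \<exists>v. v \<in> Vsucc V E p s"
proof -
  assume s: "s \<in> {s1, s2}"
  then have sv: "s \<in> V" using sV by blast
  obtain f where f: "upath V E f" "f 0 = s" using upath_exists[OF EV sv] by blast
  obtain t where "f t \<in> Vsucc V E p s" using entry[OF s f] by blast
  then show ?thesis by blast
qed

lemma dir1: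
  assumes u: "is_unfolding V E p w" and w: "w = v # zs @ b # ys" and v: "v \<in> VV1"
    and zs: "set zs \<subseteq> VV2 \<union> UU" and b: "b \<in> VV2" and ys: "set ys \<subseteq> VV1 \<union> UU"
  shows "\<exists>a b. DOD V E p s1 s2 a b"
proof -
  have ol: "olist w" using unf_olist[OF u] .
  have len: "length w = card C" and dist: "distinct w" and sw: "set w = C"
    using ol unfolding olist_def by blast+
  define m where "m = Suc (length zs)"
  have mlt: "m < card C" using len w unfolding m_def by simp
  have m0: "0 < m" unfolding m_def by simp
  have w0: "w ! 0 = v" using w by simp
  have wm: "w ! m = b" using w unfolding m_def by (simp add: nth_append)
  have n0: "0 < card C" using mlt by simp
  have aC: "w ! 0 \<in> C" "w ! m \<in> C" using sw len mlt n0 nth_mem by (metis)+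
  have ab: "w ! 0 \<noteq> w ! m" using nth_eq_iff_index_eq[OF dist] len mlt m0 n0 by simp
  have idx: "\<exists>j < card C. w ! j = u" if "u \<in> C" for u
    using that sw len by (metis in_set_conv_nth)
  have V1V2: "VV1 \<inter> VV2 = {}" by (rule disj)
  have H1: "\<forall>u\<in>VV1. d u (w ! 0) < d u (w ! m)"
  proof
    fix u assume uV: "u \<in> VV1"
    then have "u \<in> C" using E0C by blast
    then obtain j where j: "j < card C" "w ! j = u" using idx by blast
    have cls: "(j = 0 \<and> w ! j = v) \<or> (0 < j \<and> j < m \<and> w ! j \<in> set zs) \<or>
      (j = m \<and> w ! j = b) \<or> (m < j \<and> w ! j \<in> set ys)"
      using pos_cls[OF w, of j] j len unfolding m_def by simp
    have "\<not> (0 < j \<and> j < m)"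
    proof
      assume "0 < j \<and> j < m"
      then have "u \<in> set zs" using cls j(2) by auto
      then have "u \<in> VV2 \<union> UU" using zs by blast
      then show False using uV V1V2 by blast
    qed
    moreover have "j \<noteq> m"
    proof
      assume "j = m"
      then have "u = b" using wm j(2) by simp
      then show False using uV b V1V2 by blast
    qed
    ultimately have jj: "j = 0 \<or> m < j" by auto
    have d1: "d (w ! j) (w ! 0) = (if j \<le> 0 then 0 - j else card C + 0 - j)" using olist_d[OF ol j(1) n0] .
    have d2: "d (w ! j) (w ! m) = (if j \<le> m then m - j else card C + m - j)" using olist_d[OF ol j(1) mlt] .
    show "d u (w ! 0) < d u (w ! m)"
    proof (cases "j = 0")
      case True then show ?thesis using d1 d2 j(2) m0 by simp
    next
      case False then have "m < j" using jj by simp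
      then show ?thesis using d1 d2 j m0 by simp
    qed
  qed
  have H2: "\<forall>u\<in>VV2. d u (w ! m) < d u (w ! 0)"
  proof
    fix u assume uV: "u \<in> VV2"
    then have "u \<in> C" using E0C by blast
    then obtain j where j: "j < card C" "w ! j = u" using idx by blast
    have cls: "(j = 0 \<and> w ! j = v) \<or> (0 < j \<and> j < m \<and> w ! j \<in> set zs) \<or>
      (j = m \<and> w ! j = b) \<or> (m < j \<and> w ! j \<in> set ys)"
      using pos_cls[OF w, of j] j len unfolding m_def by simp
    have "j \<noteq> 0"
    proof
      assume "j = 0"
      then have "u = v" using w0 j(2) by simp
      then show False using uV v V1V2 by blast
    qed
    moreover have "\<not> m < j"
    proof
      assume "m < j"
      then have "u \<in> set ys" using cls j(2) by auto
      then have "u \<in> VV1 \<union> UU" using ys by blast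
      then show False using uV V1V2 by blast
    qed
    ultimately have jj: "0 < j" "j \<le> m" by auto
    have d1: "d (w ! j) (w ! 0) = (if j \<le> 0 then 0 - j else card C + 0 - j)" using olist_d[OF ol j(1) n0] .
    have d2: "d (w ! j) (w ! m) = (if j \<le> m then m - j else card C + m - j)" using olist_d[OF ol j(1) mlt] .
    show "d u (w ! m) < d u (w ! 0)" using d1 d2 j jj mlt by simp
  qed
  have "DOD V E p s1 s2 (w ! 0) (w ! m)" unfolding DOD_char using aC ab H1 H2 by blast
  then show ?thesis by blast
qed

lemma dir2:
  assumes D: "DOD V E p s1 s2 a b"
  shows "\<exists>w. is_unfolding V E p w \<and>
    (\<exists>v zs b ys. w = v # zs @ b # ys \<and> v \<in> VV1 \<and> set zs \<subseteq> VV2 \<union> UU \<and> b \<in> VV2 \<and> set ys \<subseteq> VV1 \<union> UU)"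
proof -
  have aC: "a \<in> C" and bC: "b \<in> C" and ab: "a \<noteq> b"
    and H1: "\<forall>v\<in>VV1. d v a < d v b" and H2: "\<forall>v\<in>VV2. d v b < d v a"
    using D unfolding DOD_char by blast+
  obtain v0 where v0: "v0 \<in> VV1" using Vne[of s1] by blast
  obtain vs where vs: "vs \<in> VV1" "\<forall>y. y \<in> VV1 \<longrightarrow> d vs a \<le> d y a"
    using ex_has_least_nat[of "\<lambda>v. v \<in> VV1" v0 "\<lambda>v. d v a"] v0 by blast
  have vsC: "vs \<in> C" using vs(1) E0C by blast
  define w where "w = orb vs"
  have ol: "olist w" and w0: "w ! 0 = vs" using orb_olist[OF vsC] unfolding w_def by auto
  have len: "length w = card C" and dist: "distinct w" and sw: "set w = C"
    using ol unfolding olist_def by blast+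
  define n where "n = card C"
  have n2: "n \<ge> 2" unfolding n_def using cardC .
  have idx: "\<exists>j < n. w ! j = u" if "u \<in> C" for u
    using that sw len unfolding n_def by (metis in_set_conv_nth)
  obtain la where la: "la < n" "w ! la = a" using idx aC by blast
  obtain lb where lb: "lb < n" "w ! lb = b" using idx bC by blast
  have n0: "0 < n" using n2 by simp
  have "d (w ! 0) (w ! la) = la" using olist_d[OF ol, of 0 la] la n0 unfolding n_def by simp
  then have da: "d vs a = la" using w0 la by simp
  have "d (w ! 0) (w ! lb) = lb" using olist_d[OF ol, of 0 lb] lb n0 unfolding n_def by simp
  then have db: "d vs b = lb" using w0 lb by simp
  have lab: "la < lb" using H1 vs(1) da db by auto
  have wne: "w \<noteq> []" using len n0 unfolding n_def by auto
  define rest where "rest = tl w"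
  have wr: "w = vs # rest" unfolding rest_def using wne w0 by (cases w) auto
  have rn: "\<And>i. rest ! i = w ! Suc i" using wr by simp
  have lrest: "length rest = n - 1" using wr len unfolding n_def by simp
  have V1V2: "VV1 \<inter> VV2 = {}" by (rule disj)
  have s1: "set rest \<subseteq> VV1 \<union> VV2 \<union> UU"
  proof
    fix x assume "x \<in> set rest"
    then have "x \<in> C" using sw wr by auto
    then show "x \<in> VV1 \<union> VV2 \<union> UU" by auto
  qed
  have s2: "\<exists>x\<in>set rest. x \<in> VV2"
  proof -
    obtain u where u: "u \<in> VV2" using Vne[of s2] by blast
    then have "u \<in> C" using E0C by blast
    then have "u \<in> set w" using sw by simp
    moreover have "u \<noteq> vs" using u vs(1) V1V2 by blast
    ultimately have "u \<in> set rest" using wr by simp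
    then show ?thesis using u by blast
  qed
  have s3: "\<forall>i j. i < j \<longrightarrow> j < length rest \<longrightarrow> rest ! i \<in> VV1 \<longrightarrow> rest ! j \<notin> VV2"
  proof (intro allI impI)
    fix i j assume ij: "i < j" "j < length rest" "rest ! i \<in> VV1"
    show "rest ! j \<notin> VV2"
    proof
      assume K2: "rest ! j \<in> VV2"
      define J where "J = Suc i"
      define K where "K = Suc j"
      have JK: "J < K" "K < n" "0 < J" using ij lrest n2 unfolding J_def K_def by auto
      have J1: "w ! J \<in> VV1" using ij(3) rn unfolding J_def by simp
      have K1: "w ! K \<in> VV2" using K2 rn unfolding K_def by simp
      have Jn: "J < card C" "K < card C" using JK unfolding n_def by auto
      have dJa: "d (w ! J) (w ! la) = (if J \<le> la then la - J else n + la - J)"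
        using olist_d[OF ol Jn(1), of la] la(1) unfolding n_def by simp
      have dJb: "d (w ! J) (w ! lb) = (if J \<le> lb then lb - J else n + lb - J)"
        using olist_d[OF ol Jn(1), of lb] lb(1) unfolding n_def by simp
      have dKa: "d (w ! K) (w ! la) = (if K \<le> la then la - K else n + la - K)"
        using olist_d[OF ol Jn(2), of la] la(1) unfolding n_def by simp
      have dKb: "d (w ! K) (w ! lb) = (if K \<le> lb then lb - K else n + lb - K)"
        using olist_d[OF ol Jn(2), of lb] lb(1) unfolding n_def by simp
      have minJ: "la \<le> d (w ! J) (w ! la)" using vs(2) J1 da la(2) by auto
      have h1: "d (w ! J) (w ! la) < d (w ! J) (w ! lb)" using H1 J1 la(2) lb(2) by auto
      have h2: "d (w ! K) (w ! lb) < d (w ! K) (w ! la)" using H2 K1 la(2) lb(2) by auto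
      have "\<not> J \<le> la"
      proof
        assume "J \<le> la"
        then show False using minJ dJa JK(3) by simp
      qed
      then have Jla: "la < J" by simp
      have "\<not> J \<le> lb"
      proof
        assume "J \<le> lb"
        then show False using h1 dJa dJb Jla lb(1) by simp
      qed
      then have Jlb: "lb < J" by simp
      then have "lb < K" "la < K" using JK(1) lab by auto
      then show False using h2 dKa dKb JK(2) lab by simp
    qed
  qed
  obtain zs b' ys where sp: "rest = zs @ b' # ys" "set zs \<subseteq> VV2 \<union> UU" "b' \<in> VV2" "set ys \<subseteq> VV1 \<union> UU"
    using split_word[OF s1 s2 s3] by blast
  have U: "is_unfolding V E p w" using olist_unf[OF ol] .
  have WE: "w = vs # zs @ b' # ys" using wr sp(1) by simp
  have "\<exists>v zs b ys. w = v # zs @ b # ys \<and> v \<in> VV1 \<and> set zs \<subseteq> VV2 \<union> UU \<and> b \<in> VV2 \<and> set ys \<subseteq> VV1 \<union> UU"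
    by (rule exI[of _ vs], rule exI[of _ zs], rule exI[of _ b'], rule exI[of _ ys])
      (intro conjI WE vs(1) sp(2) sp(3) sp(4))
  then show ?thesis using U by (intro exI[of _ w] conjI)
qed

end

theorem theorem4p14:
  fixes V :: "'a set" and E :: "('a \<times> 'a) set" and p s1 s2 :: 'a
  assumes "cfg V E"
    and "p \<in> V"
    and "E `` {p} = {s1, s2}" and "s1 \<noteq> s2"
    and "card (Ap_edges V E p `` {p}) \<ge> 2"
    and "Vsucc V E p s1 \<inter> Vsucc V E p s2 = {}"
  shows "(\<exists>a b. DOD V E p s1 s2 a b) \<longleftrightarrow>
    (\<exists>w. is_unfolding V E p w \<and>
       (let V1 = Vsucc V E p s1; V2 = Vsucc V E p s2; U = Vp V E p - (V1 \<union> V2) in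
        w \<in> letters V1 \<cdot>\<cdot> lstar (letters U) \<cdot>\<cdot> lstar (letters V2 \<cdot>\<cdot> lstar (letters U))
             \<cdot>\<cdot> letters V2 \<cdot>\<cdot> lstar (letters U) \<cdot>\<cdot> lstar (letters V1 \<cdot>\<cdot> lstar (letters U))))"
proof -
  have "S2 V E p s1 s2" unfolding S2_def S2_axioms_def S_def using assms by blast
  then interpret S2 V E p s1 s2 .
  have L: "\<And>w. (let V1 = Vsucc V E p s1; V2 = Vsucc V E p s2; U = Vp V E p - (V1 \<union> V2) in
        w \<in> letters V1 \<cdot>\<cdot> lstar (letters U) \<cdot>\<cdot> lstar (letters V2 \<cdot>\<cdot> lstar (letters U))
             \<cdot>\<cdot> letters V2 \<cdot>\<cdot> lstar (letters U) \<cdot>\<cdot> lstar (letters V1 \<cdot>\<cdot> lstar (letters U)))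
     \<longleftrightarrow> (\<exists>v zs b ys. w = v # zs @ b # ys \<and> v \<in> VV1 \<and> set zs \<subseteq> VV2 \<union> UU \<and> b \<in> VV2 \<and> set ys \<subseteq> VV1 \<union> UU)"
    unfolding Let_def by (rule Lang_char)
  show ?thesis
  proof
    assume "\<exists>a b. DOD V E p s1 s2 a b"
    then obtain a b where "DOD V E p s1 s2 a b" by blast
    then have "\<exists>w. is_unfolding V E p w \<and>
      (\<exists>v zs b ys. w = v # zs @ b # ys \<and> v \<in> VV1 \<and> set zs \<subseteq> VV2 \<union> UU \<and> b \<in> VV2 \<and> set ys \<subseteq> VV1 \<union> UU)"
      by (rule dir2)
    then obtain w where ww: "is_unfolding V E p w \<and>
      (\<exists>v zs b ys. w = v # zs @ b # ys \<and> v \<in> VV1 \<and> set zs \<subseteq> VV2 \<union> UU \<and> b \<in> VV2 \<and> set ys \<subseteq> VV1 \<union> UU)"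
      by (rule exE)
    have w1: "is_unfolding V E p w" using ww by (rule conjunct1)
    have w2: "\<exists>v zs b ys. w = v # zs @ b # ys \<and> v \<in> VV1 \<and> set zs \<subseteq> VV2 \<union> UU \<and> b \<in> VV2 \<and> set ys \<subseteq> VV1 \<union> UU"
      using ww by (rule conjunct2)
    then show "\<exists>w. is_unfolding V E p w \<and>
       (let V1 = Vsucc V E p s1; V2 = Vsucc V E p s2; U = Vp V E p - (V1 \<union> V2) in
        w \<in> letters V1 \<cdot>\<cdot> lstar (letters U) \<cdot>\<cdot> lstar (letters V2 \<cdot>\<cdot> lstar (letters U))
             \<cdot>\<cdot> letters V2 \<cdot>\<cdot> lstar (letters U) \<cdot>\<cdot> lstar (letters V1 \<cdot>\<cdot> lstar (letters U)))"
      using w1 w2 L[of w] by (intro exI[of _ w] conjI) simp_all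
  next
    assume "\<exists>w. is_unfolding V E p w \<and>
       (let V1 = Vsucc V E p s1; V2 = Vsucc V E p s2; U = Vp V E p - (V1 \<union> V2) in
        w \<in> letters V1 \<cdot>\<cdot> lstar (letters U) \<cdot>\<cdot> lstar (letters V2 \<cdot>\<cdot> lstar (letters U))
             \<cdot>\<cdot> letters V2 \<cdot>\<cdot> lstar (letters U) \<cdot>\<cdot> lstar (letters V1 \<cdot>\<cdot> lstar (letters U)))"
    then obtain w where w0: "is_unfolding V E p w" and w00: "(let V1 = Vsucc V E p s1; V2 = Vsucc V E p s2; U = Vp V E p - (V1 \<union> V2) in
        w \<in> letters V1 \<cdot>\<cdot> lstar (letters U) \<cdot>\<cdot> lstar (letters V2 \<cdot>\<cdot> lstar (letters U))
             \<cdot>\<cdot> letters V2 \<cdot>\<cdot> lstar (letters U) \<cdot>\<cdot> lstar (letters V1 \<cdot>\<cdot> lstar (letters U)))"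
      by (elim exE conjE)
    have w: "is_unfolding V E p w"
      "\<exists>v zs b ys. w = v # zs @ b # ys \<and> v \<in> VV1 \<and> set zs \<subseteq> VV2 \<union> UU \<and> b \<in> VV2 \<and> set ys \<subseteq> VV1 \<union> UU"
      using w0 w00 L[of w] by simp_all
    then obtain v zs b ys where "w = v # zs @ b # ys" "v \<in> VV1" "set zs \<subseteq> VV2 \<union> UU" "b \<in> VV2" "set ys \<subseteq> VV1 \<union> UU"
      by (elim exE conjE)
    then show "\<exists>a b. DOD V E p s1 s2 a b" by (rule dir1[OF w(1)])
  qed
qed

end
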